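(* Each of the matroids $U_{2,5}$, $U_{3,5}$, $K$ and $K^*$ is an excluded minor for the class $\mathcal{R}$.
   Context: $\mathcal{R}$ is the class of matroids that are binary or can be obtained from a binary matroid by relaxing a circuit-hyperplane (relaxing a circuit-hyperplane $H$ of $M$ means forming the matroid on $E(M)$ whose bases are the bases of $M$ together with $H$). $K$ is the seven-element rank-2 matroid obtained from $U_{2,4}$ by adding one new element in parallel to each of three of its four elements; $K^*$ is its dual. An excluded minor for a minor-closed class is a matroid not in the class all of whose proper minors are in the class. *)

theory Defs
  imports Main
begin

type_synonym 'a matroid = "'a set \<times> 'a set set"

definition ground :: "'a matroid \<Rightarrow> 'a set" where "ground M = fst M"
definition bases :: "'a matroid \<Rightarrow> 'a set set" where "bases M = snd M"

definition is_matroid :: "'a matroid \<Rightarrow> bool" where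
  "is_matroid M \<longleftrightarrow> finite (ground M) \<and> bases M \<subseteq> Pow (ground M) \<and> bases M \<noteq> {} \<and>
     (\<forall>B1\<in>bases M. \<forall>B2\<in>bases M. \<forall>x\<in>B1 - B2.
        \<exists>y\<in>B2 - B1. insert y (B1 - {x}) \<in> bases M)"

definition indep :: "'a matroid \<Rightarrow> 'a set \<Rightarrow> bool" where
  "indep M I \<longleftrightarrow> (\<exists>B\<in>bases M. I \<subseteq> B)"

definition rank :: "'a matroid \<Rightarrow> 'a set \<Rightarrow> nat" where
  "rank M X = Max {card I | I. I \<subseteq> X \<and> indep M I}"

definition circuit :: "'a matroid \<Rightarrow> 'a set \<Rightarrow> bool" where
  "circuit M C \<longleftrightarrow> C \<subseteq> ground M \<and> \<not> indep M C \<and> (\<forall>x\<in>C. indep M (C - {x}))"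

definition hyperplane :: "'a matroid \<Rightarrow> 'a set \<Rightarrow> bool" where
  "hyperplane M H \<longleftrightarrow> H \<subseteq> ground M \<and> rank M H + 1 = rank M (ground M) \<and>
     (\<forall>x\<in>ground M - H. rank M (insert x H) > rank M H)"

definition circuit_hyperplane :: "'a matroid \<Rightarrow> 'a set \<Rightarrow> bool" where
  "circuit_hyperplane M H \<longleftrightarrow> circuit M H \<and> hyperplane M H"

definition relax :: "'a matroid \<Rightarrow> 'a set \<Rightarrow> 'a matroid" where
  "relax M H = (ground M, insert H (bases M))"

definition dual :: "'a matroid \<Rightarrow> 'a matroid" where
  "dual M = (ground M, (\<lambda>B. ground M - B) ` bases M)"

definition delete :: "'a matroid \<Rightarrow> 'a set \<Rightarrow> 'a matroid" where
  "delete M D = (ground M - D,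
     {B. B \<subseteq> ground M - D \<and> indep M B \<and> (\<forall>x\<in>ground M - D - B. \<not> indep M (insert x B))})"

definition contract :: "'a matroid \<Rightarrow> 'a set \<Rightarrow> 'a matroid" where
  "contract M C = dual (delete (dual M) C)"

definition minor :: "'a matroid \<Rightarrow> 'a matroid \<Rightarrow> bool" where
  "minor N M \<longleftrightarrow> (\<exists>C D. C \<subseteq> ground M \<and> D \<subseteq> ground M \<and> C \<inter> D = {} \<and>
                    N = delete (contract M C) D)"

definition proper_minor :: "'a matroid \<Rightarrow> 'a matroid \<Rightarrow> bool" where
  "proper_minor N M \<longleftrightarrow> (\<exists>C D. C \<subseteq> ground M \<and> D \<subseteq> ground M \<and> C \<inter> D = {} \<and>
                    C \<union> D \<noteq> {} \<and> N = delete (contract M C) D)"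

text \<open>Each element e gets a vector phi e
  (coordinates indexed by nat, entries in GF(2) = bool).  A set I is linearly
  independent over GF(2) iff no nonempty subset of I sums to zero.\<close>
definition gf2_indep :: "('a \<Rightarrow> nat \<Rightarrow> bool) \<Rightarrow> 'a set \<Rightarrow> bool" where
  "gf2_indep phi I \<longleftrightarrow> (\<forall>S\<subseteq>I. S \<noteq> {} \<longrightarrow> (\<exists>k. odd (card {e\<in>S. phi e k})))"

definition binary :: "'a matroid \<Rightarrow> bool" where
  "binary M \<longleftrightarrow> (\<exists>phi :: 'a \<Rightarrow> nat \<Rightarrow> bool.
                   \<forall>I\<subseteq>ground M. indep M I \<longleftrightarrow> gf2_indep phi I)"

definition in_R :: "'a matroid \<Rightarrow> bool" where
  "in_R M \<longleftrightarrow> is_matroid M \<and>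
     (binary M \<or> (\<exists>N H. is_matroid N \<and> binary N \<and> circuit_hyperplane N H \<and> M = relax N H))"

definition excluded_minor_R :: "'a matroid \<Rightarrow> bool" where
  "excluded_minor_R M \<longleftrightarrow> is_matroid M \<and> \<not> in_R M \<and> (\<forall>N. proper_minor N M \<longrightarrow> in_R N)"

definition uniform :: "nat \<Rightarrow> nat \<Rightarrow> nat matroid" where
  "uniform r n = ({0..<n}, {B. B \<subseteq> {0..<n} \<and> card B = r})"

text \<open>K: U_{2,4} on {0,1,2,3}, with 4,5,6 added in parallel to 0,1,2 respectively.\<close>
definition Kcls :: "nat \<Rightarrow> nat" where
  "Kcls x = (if x = 4 then 0 else if x = 5 then 1 else if x = 6 then 2 else x)"

definition K :: "nat matroid" where
  "K = ({0..<7}, {{a, b} | a b. a \<in> {0..<7} \<and> b \<in> {0..<7} \<and> Kcls a \<noteq> Kcls b})"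

definition Kstar :: "nat matroid" where
  "Kstar = dual K"

end

theory Submission
  imports Defs
begin

definition T :: "nat set \<Rightarrow> nat set \<Rightarrow> (nat \<Rightarrow> nat) \<Rightarrow> nat \<Rightarrow> nat matroid" where
  "T E L f r = (E, {B. B \<subseteq> E - L \<and> card B = r \<and> inj_on f B})"

definition cl :: "nat set \<Rightarrow> nat set \<Rightarrow> (nat \<Rightarrow> nat) \<Rightarrow> nat" where
  "cl E L f = card (f ` (E - L))"

lemma ground_T[simp]: "ground (T E L f r) = E" by (simp add: T_def ground_def)
lemma bases_T: "bases (T E L f r) = {B. B \<subseteq> E - L \<and> card B = r \<and> inj_on f B}"
  by (simp add: T_def bases_def)

lemma extend_T:
  assumes fin: "finite E" and I: "I \<subseteq> E - L" "inj_on f I" "card I \<le> r"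
    and r: "r \<le> card (f ` (E - L))"
  shows "\<exists>B. I \<subseteq> B \<and> B \<subseteq> E - L \<and> inj_on f B \<and> card B = r"
  using I
proof (induction "r - card I" arbitrary: I)
  case 0
  then show ?case by (intro exI[of _ I]) auto
next
  case (Suc n)
  have finI: "finite I" using Suc.prems fin finite_subset by blast
  have "card (f ` I) = card I" using Suc.prems card_image by blast
  also have "\<dots> < card (f ` (E - L))" using Suc.hyps r by linarith
  finally have "f ` I \<subset> f ` (E - L)" using Suc.prems(1)
    by (metis image_mono less_irrefl psubsetI)
  then obtain e where e: "e \<in> E - L" "f e \<notin> f ` I" by blast
  then have eI: "e \<notin> I" by blast
  have "\<exists>B. insert e I \<subseteq> B \<and> B \<subseteq> E - L \<and> inj_on f B \<and> card B = r"
  proof (rule Suc.hyps(1))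
    show "n = r - card (insert e I)" using Suc.hyps(2) finI eI by simp
    show "insert e I \<subseteq> E - L" using Suc.prems e by blast
    show "inj_on f (insert e I)" using Suc.prems e by (simp add: image_iff)
    show "card (insert e I) \<le> r" using Suc.hyps(2) finI eI by simp
  qed
  then show ?case by blast
qed

lemma T_indep:
  assumes fin: "finite E" and r: "r \<le> cl E L f"
  shows "indep (T E L f r) I \<longleftrightarrow> I \<subseteq> E - L \<and> inj_on f I \<and> card I \<le> r"
proof
  assume "indep (T E L f r) I"
  then obtain B where B: "B \<subseteq> E - L" "card B = r" "inj_on f B" "I \<subseteq> B"
    unfolding indep_def bases_T by blast
  then have "finite B" using fin finite_subset by blast
  then show "I \<subseteq> E - L \<and> inj_on f I \<and> card I \<le> r"
    using B card_mono[of B I] inj_on_subset[of f B I] by auto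
next
  assume "I \<subseteq> E - L \<and> inj_on f I \<and> card I \<le> r"
  then obtain B where "I \<subseteq> B \<and> B \<subseteq> E - L \<and> inj_on f B \<and> card B = r"
    using extend_T[OF fin, of I L f r] r unfolding cl_def by auto
  then show "indep (T E L f r) I" unfolding indep_def bases_T by blast
qed

lemma T_bases_Pow: "bases (T E L f r) \<subseteq> Pow (ground (T E L f r))"
  by (auto simp: bases_T)

lemma is_matroid_T:
  assumes fin: "finite E" and r: "r \<le> cl E L f"
  shows "is_matroid (T E L f r)"
  unfolding is_matroid_def
proof (intro conjI ballI)
  show "finite (ground (T E L f r))" using fin by simp
  show "bases (T E L f r) \<subseteq> Pow (ground (T E L f r))" by (rule T_bases_Pow)
  show "bases (T E L f r) \<noteq> {}"
    using extend_T[OF fin, of "{}" L f r] r unfolding cl_def bases_T by auto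
  fix B1 B2 x assume B1: "B1 \<in> bases (T E L f r)" and B2: "B2 \<in> bases (T E L f r)"
    and x: "x \<in> B1 - B2"
  have B1': "B1 \<subseteq> E - L" "card B1 = r" "inj_on f B1" using B1 by (auto simp: bases_T)
  have B2': "B2 \<subseteq> E - L" "card B2 = r" "inj_on f B2" using B2 by (auto simp: bases_T)
  have fB1: "finite B1" "finite B2" using B1' B2' fin finite_subset by blast+
  have c1: "card (f ` (B1 - {x})) = r - 1"
    using B1' x fB1 by (simp add: card_image inj_on_diff)
  have c2: "card (f ` B2) = r" using B2' card_image by blast
  have c3: "r \<ge> 1" using B1' x fB1
    by (metis DiffD1 card_0_eq empty_iff less_one not_le)
  have "\<not> f ` B2 \<subseteq> f ` (B1 - {x})"
  proof
    assume "f ` B2 \<subseteq> f ` (B1 - {x})"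
    then have "card (f ` B2) \<le> card (f ` (B1 - {x}))" using fB1 by (intro card_mono) auto
    then show False using c1 c2 c3 by linarith
  qed
  then obtain y where y: "y \<in> B2" "f y \<notin> f ` (B1 - {x})" by blast
  have yB1: "y \<notin> B1 - {x}" using y by blast
  have yx: "y \<noteq> x" using x y by blast
  show "\<exists>y\<in>B2 - B1. insert y (B1 - {x}) \<in> bases (T E L f r)"
  proof (intro bexI[of _ y])
    show "y \<in> B2 - B1" using yB1 yx y by blast
    show "insert y (B1 - {x}) \<in> bases (T E L f r)"
      unfolding bases_T using B1' B2' y yB1 x fB1 c3
      by (auto simp: inj_on_diff card_insert_if)
  qed
qed


lemma ground_dual[simp]: "ground (dual M) = ground M" by (simp add: dual_def ground_def)
lemma bases_dual: "bases (dual M) = (\<lambda>B. ground M - B) ` bases M" by (simp add: dual_def bases_def)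
lemma ground_delete[simp]: "ground (delete M D) = ground M - D" by (simp add: delete_def ground_def)
lemma bases_delete: "bases (delete M D) =
  {B. B \<subseteq> ground M - D \<and> indep M B \<and> (\<forall>x\<in>ground M - D - B. \<not> indep M (insert x B))}"
  by (simp add: delete_def bases_def)

lemma matroid_eqI: "ground M = ground N \<Longrightarrow> bases M = bases N \<Longrightarrow> M = N"
  by (simp add: ground_def bases_def prod_eq_iff)

lemma dual_dual: "bases M \<subseteq> Pow (ground M) \<Longrightarrow> dual (dual M) = M"
  apply (rule matroid_eqI)
   apply simp
  apply (simp add: bases_dual image_image)
  apply (rule trans[of _ "id ` bases M"])
   apply (rule image_cong, simp, force)
  by simp

lemma contract_dual: "bases M \<subseteq> Pow (ground M) \<Longrightarrow> contract (dual M) C = dual (delete M C)"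
  by (simp add: contract_def dual_dual)

lemma delete_dual: "delete (dual X) D = dual (contract X D)"
proof -
  have "bases (delete (dual X) D) \<subseteq> Pow (ground (delete (dual X) D))"
    by (auto simp: bases_delete)
  then show ?thesis by (simp add: contract_def dual_dual)
qed

lemma minor_dual: "bases M \<subseteq> Pow (ground M) \<Longrightarrow>
  delete (contract (dual M) C) D = dual (contract (delete M C) D)"
  by (simp add: contract_dual delete_dual)

lemma T_dual_indep:
  assumes fin: "finite E" and r: "r \<le> cl E L f"
  shows "indep (dual (T E L f r)) X \<longleftrightarrow> X \<subseteq> E \<and> r \<le> cl (E - X) L f"
proof
  assume "indep (dual (T E L f r)) X"
  then obtain B where B: "B \<subseteq> E - L" "card B = r" "inj_on f B" "X \<subseteq> E - B"
    unfolding indep_def bases_dual bases_T by auto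
  have "finite B" using B fin finite_subset by blast
  have "card (f ` B) = r" using B card_image by blast
  moreover have "f ` B \<subseteq> f ` (E - X - L)" using B by auto
  ultimately have "r \<le> cl (E - X) L f" unfolding cl_def using fin
    by (metis card_mono finite_Diff finite_imageI)
  then show "X \<subseteq> E \<and> r \<le> cl (E - X) L f" using B by auto
next
  assume A: "X \<subseteq> E \<and> r \<le> cl (E - X) L f"
  obtain B where B: "B \<subseteq> E - X - L \<and> inj_on f B \<and> card B = r"
    using extend_T[of "E - X" "{}" L f r] fin A unfolding cl_def by auto
  then have "B \<in> bases (T E L f r)" by (auto simp: bases_T)
  moreover have "X \<subseteq> E - B" using A B by auto
  ultimately show "indep (dual (T E L f r)) X"
    unfolding indep_def bases_dual by auto
qed

lemma is_matroid_dual_T: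
  assumes fin: "finite E" and r: "r \<le> cl E L f"
  shows "is_matroid (dual (T E L f r))"
  unfolding is_matroid_def
proof (intro conjI ballI)
  show "finite (ground (dual (T E L f r)))" using fin by simp
  show "bases (dual (T E L f r)) \<subseteq> Pow (ground (dual (T E L f r)))" by (auto simp: bases_dual)
  show "bases (dual (T E L f r)) \<noteq> {}"
    using is_matroid_T[OF fin r] unfolding is_matroid_def bases_dual by auto
  fix B1' B2' x assume B1: "B1' \<in> bases (dual (T E L f r))" and B2: "B2' \<in> bases (dual (T E L f r))"
    and x: "x \<in> B1' - B2'"
  obtain B1 where B1': "B1 \<subseteq> E - L" "card B1 = r" "inj_on f B1" "B1' = E - B1"
    using B1 by (auto simp: bases_dual bases_T)
  obtain B2 where B2': "B2 \<subseteq> E - L" "card B2 = r" "inj_on f B2" "B2' = E - B2"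
    using B2 by (auto simp: bases_dual bases_T)
  have fB: "finite B1" "finite B2" using B1' B2' fin finite_subset by blast+
  have xB: "x \<in> B2" "x \<notin> B1" "x \<in> E" using x B1' B2' by auto
  have key: "\<exists>y\<in>B1 - B2. insert x (B1 - {y}) \<in> bases (T E L f r)"
  proof (cases "\<exists>z\<in>B1. f z = f x")
    case True
    then obtain z where z: "z \<in> B1" "f z = f x" by blast
    have "z \<notin> B2" using z xB B2' by (metis inj_on_def)
    moreover have "f x \<notin> f ` (B1 - {z})" using z B1'(3) by (auto simp: inj_on_def)
    moreover have "card B1 \<ge> 1" using z fB by (metis One_nat_def Suc_leI card_gt_0_iff empty_iff)
    ultimately show ?thesis using z xB B1' B2' fB
      by (intro bexI[of _ z]) (auto simp: bases_T card_insert_if inj_on_diff)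
  next
    case False
    have "\<not> B1 \<subseteq> B2"
    proof
      assume "B1 \<subseteq> B2"
      then have "B1 = B2" using fB B1' B2' by (metis card_subset_eq)
      then show False using xB by simp
    qed
    then obtain y where y: "y \<in> B1" "y \<notin> B2" by blast
    have c1: "card B1 \<ge> 1" using y fB by (metis One_nat_def Suc_leI card_gt_0_iff empty_iff)
    then show ?thesis using y xB B1' B2' fB False
      by (intro bexI[of _ y]) (auto simp: bases_T card_insert_if inj_on_diff)
  qed
  then obtain y where y: "y \<in> B1 - B2" "insert x (B1 - {y}) \<in> bases (T E L f r)" by blast
  show "\<exists>y\<in>B2' - B1'. insert y (B1' - {x}) \<in> bases (dual (T E L f r))"
  proof (intro bexI[of _ y])
    show "y \<in> B2' - B1'" using y B1' B2' by auto
    have "insert y (B1' - {x}) = E - insert x (B1 - {y})" using y xB B1' by auto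
    then show "insert y (B1' - {x}) \<in> bases (dual (T E L f r))"
      using y(2) unfolding bases_dual by auto
  qed
qed


lemma T_delete:
  assumes fin: "finite E" and r: "r \<le> cl E L f"
  shows "delete (T E L f r) D = T (E - D) L f (min r (cl (E - D) L f))"
proof (rule matroid_eqI)
  show "ground (delete (T E L f r) D) = ground (T (E - D) L f (min r (cl (E - D) L f)))" by simp
  let ?m = "cl (E - D) L f"
  have ind: "\<And>I. indep (T E L f r) I \<longleftrightarrow> I \<subseteq> E - L \<and> inj_on f I \<and> card I \<le> r"
    using T_indep[OF fin r] .
  have finm: "finite (f ` (E - D - L))" using fin by auto
  show "bases (delete (T E L f r) D) = bases (T (E - D) L f (min r ?m))"
  proof (intro set_eqI iffI)
    fix B assume "B \<in> bases (delete (T E L f r) D)"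
    then have B: "B \<subseteq> E - D" "B \<subseteq> E - L" "inj_on f B" "card B \<le> r"
      and mx: "\<forall>x\<in>E - D - B. \<not> indep (T E L f r) (insert x B)"
      unfolding bases_delete ind by auto
    have finB: "finite B" using B fin finite_subset by blast
    have cB: "card (f ` B) = card B" using B card_image by blast
    have "f ` B \<subseteq> f ` (E - D - L)" using B by auto
    then have le: "card B \<le> ?m" unfolding cl_def using cB finm card_mono by metis
    have "card B = min r ?m"
    proof (rule ccontr)
      assume "card B \<noteq> min r ?m"
      then have lt: "card B < r" "card B < ?m" using le B by auto
      then have "f ` B \<noteq> f ` (E - D - L)" using cB unfolding cl_def by auto
      then obtain x where x: "x \<in> E - D - L" "f x \<notin> f ` B" using \<open>f ` B \<subseteq> _\<close> by blast
      then have "x \<notin> B" by auto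
      then have "indep (T E L f r) (insert x B)"
        unfolding ind using x B lt finB by auto
      then show False using mx x \<open>x \<notin> B\<close> by auto
    qed
    then show "B \<in> bases (T (E - D) L f (min r ?m))" using B by (auto simp: bases_T)
  next
    fix B assume "B \<in> bases (T (E - D) L f (min r ?m))"
    then have B: "B \<subseteq> E - D - L" "inj_on f B" "card B = min r ?m" by (auto simp: bases_T)
    have finB: "finite B" using B fin finite_subset by blast
    have "\<not> indep (T E L f r) (insert x B)" if x: "x \<in> E - D - B" for x
    proof
      assume "indep (T E L f r) (insert x B)"
      then have I: "insert x B \<subseteq> E - L" "inj_on f (insert x B)" "card (insert x B) \<le> r"
        unfolding ind by auto
      have xB: "x \<notin> B" using x by auto
      then have "card B < r" using I finB by simp
      then have cm: "card B = ?m" using B by auto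
      have "f ` insert x B \<subseteq> f ` (E - D - L)" using I x B by auto
      then have "card (f ` insert x B) \<le> ?m" unfolding cl_def using finm card_mono by metis
      moreover have "card (f ` insert x B) = card B + 1"
        using I xB finB by (simp add: card_image)
      ultimately show False using cm by simp
    qed
    then show "B \<in> bases (delete (T E L f r) D)"
      unfolding bases_delete ind using B by auto
  qed
qed


lemma contract_core:
  fixes f :: "nat \<Rightarrow> nat" and L :: "nat set" and r :: nat
  assumes fin: "finite E" and C: "C \<subseteq> E" and Y: "Y \<subseteq> E - C"
  defines "g \<equiv> \<lambda>Y. card (f ` ((Y \<union> C) - L))"
  shows "(r \<le> g Y \<and> (\<forall>y\<in>Y. g (Y - {y}) < r)) \<longleftrightarrow>
         (Y \<subseteq> E - C - (L \<union> f -` f ` (C - L)) \<and> card Y = r - card (f ` (C - L)) \<and> inj_on f Y)"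
proof -
  let ?K = "f ` (C - L)"
  have finY: "finite Y" using Y fin finite_subset by blast
  have finK: "finite ?K" using C fin finite_subset by blast
  have gsplit: "g Z = card (f ` Z) + card ?K" if Z: "Z \<subseteq> Y" "Z \<inter> L = {}" "f ` Z \<inter> ?K = {}" for Z
  proof -
    have "f ` ((Z \<union> C) - L) = f ` Z \<union> ?K" using Z by auto
    moreover have "finite (f ` Z)" using Z finY finite_subset by blast
    ultimately show ?thesis unfolding g_def using Z finK by (simp add: card_Un_disjoint)
  qed
  show ?thesis
  proof
    assume A: "r \<le> g Y \<and> (\<forall>y\<in>Y. g (Y - {y}) < r)"
    have same: "g (Y - {y}) = g Y" if "y \<in> Y" "y \<in> L \<or> f y \<in> f ` ((Y - {y} \<union> C) - L)" for y
    proof -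
      have "f ` ((Y - {y} \<union> C) - L) = f ` ((Y \<union> C) - L)" using that by auto
      then show ?thesis unfolding g_def by simp
    qed
    have good: "y \<notin> L \<and> f y \<notin> f ` ((Y - {y} \<union> C) - L)" if "y \<in> Y" for y
    proof (rule ccontr)
      assume "\<not> (y \<notin> L \<and> f y \<notin> f ` ((Y - {y} \<union> C) - L))"
      then have "g (Y - {y}) = g Y" using same[OF that] by blast
      then show False using A that by fastforce
    qed
    have YL: "Y \<inter> L = {}" using good by auto
    have YK: "f ` Y \<inter> ?K = {}"
    proof (rule ccontr)
      assume "f ` Y \<inter> ?K \<noteq> {}"
      then obtain y where "y \<in> Y" "f y \<in> ?K" by blast
      then have "f y \<in> f ` ((Y - {y} \<union> C) - L)" using Y by auto
      then show False using good \<open>y \<in> Y\<close> by blast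
    qed
    have inj: "inj_on f Y"
    proof (rule inj_onI)
      fix a b assume ab: "a \<in> Y" "b \<in> Y" "f a = f b"
      show "a = b"
      proof (rule ccontr)
        assume "a \<noteq> b"
        then have "f a \<in> f ` ((Y - {a} \<union> C) - L)" using ab YL by auto
        then show False using good ab by auto
      qed
    qed
    have gY: "g Y = card Y + card ?K" using gsplit[of Y] YL YK inj card_image by auto
    have "card Y = r - card ?K"
    proof (cases "Y = {}")
      case True
      then show ?thesis using A gY by simp
    next
      case False
      then obtain y where y: "y \<in> Y" by blast
      have "g (Y - {y}) = card (Y - {y}) + card ?K"
        using gsplit[of "Y - {y}"] YL YK inj_on_diff[OF inj] card_image[of f "Y - {y}"] by auto
      then have "g (Y - {y}) = card Y - 1 + card ?K" using y finY by simp
      moreover have "card Y > 0" using y finY card_gt_0_iff by blast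
      ultimately show ?thesis using A y gY by fastforce
    qed
    then show "Y \<subseteq> E - C - (L \<union> f -` ?K) \<and> card Y = r - card ?K \<and> inj_on f Y"
      using Y YL YK inj by auto
  next
    assume B: "Y \<subseteq> E - C - (L \<union> f -` ?K) \<and> card Y = r - card ?K \<and> inj_on f Y"
    have YL: "Y \<inter> L = {}" and YK: "f ` Y \<inter> ?K = {}" and inj: "inj_on f Y" using B by auto
    have gY: "g Y = card Y + card ?K" using gsplit[of Y] YL YK inj card_image by auto
    have "r \<le> g Y" using gY B by simp
    moreover have "g (Y - {y}) < r" if y: "y \<in> Y" for y
    proof -
      have "g (Y - {y}) = card (Y - {y}) + card ?K"
        using gsplit[of "Y - {y}"] YL YK inj_on_diff[OF inj] card_image[of f "Y - {y}"] by auto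
      then have "g (Y - {y}) = card Y - 1 + card ?K" using y finY by simp
      moreover have "card Y > 0" using y finY card_gt_0_iff by blast
      ultimately show ?thesis using B by simp
    qed
    ultimately show "r \<le> g Y \<and> (\<forall>y\<in>Y. g (Y - {y}) < r)" by blast
  qed
qed

lemma T_contract:
  assumes fin: "finite E" and r: "r \<le> cl E L f" and C: "C \<subseteq> E"
  shows "contract (T E L f r) C = T (E - C) (L \<union> f -` f ` (C - L)) f (r - cl C L f)"
proof (rule matroid_eqI)
  show "ground (contract (T E L f r) C) = ground (T (E - C) (L \<union> f -` f ` (C - L)) f (r - cl C L f))"
    by (simp add: contract_def)
  let ?g = "\<lambda>Y. card (f ` ((Y \<union> C) - L))"
  let ?D = "dual (T E L f r)"
  have ind: "\<And>X. X \<subseteq> E - C \<Longrightarrow> indep ?D X \<longleftrightarrow> r \<le> ?g ((E - C) - X)"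
  proof -
    fix X assume X: "X \<subseteq> E - C"
    have "E - X = ((E - C) - X) \<union> C" using X C by auto
    then show "indep ?D X \<longleftrightarrow> r \<le> ?g ((E - C) - X)"
      using T_dual_indep[OF fin r, of X] X unfolding cl_def by auto
  qed
  have bc: "bases (contract (T E L f r) C) = (\<lambda>X. (E - C) - X) `
     {X. X \<subseteq> E - C \<and> indep ?D X \<and> (\<forall>x\<in>E - C - X. \<not> indep ?D (insert x X))}"
    by (simp add: contract_def bases_dual bases_delete)
  have core: "\<And>Y. Y \<subseteq> E - C \<Longrightarrow> (r \<le> ?g Y \<and> (\<forall>y\<in>Y. ?g (Y - {y}) < r)) \<longleftrightarrow>
         Y \<in> bases (T (E - C) (L \<union> f -` f ` (C - L)) f (r - cl C L f))"
    using contract_core[OF fin C] unfolding bases_T cl_def by auto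
  show "bases (contract (T E L f r) C) = bases (T (E - C) (L \<union> f -` f ` (C - L)) f (r - cl C L f))"
  proof (intro set_eqI iffI)
    fix Y assume "Y \<in> bases (contract (T E L f r) C)"
    then obtain X where X: "X \<subseteq> E - C" "indep ?D X" "\<forall>x\<in>E - C - X. \<not> indep ?D (insert x X)"
      and YX: "Y = (E - C) - X" unfolding bc by auto
    have "r \<le> ?g Y" using ind[OF X(1)] X YX by simp
    moreover have "?g (Y - {y}) < r" if y: "y \<in> Y" for y
    proof -
      have "insert y X \<subseteq> E - C" and "(E - C) - insert y X = Y - {y}" using y YX X by auto
      then show ?thesis using ind[of "insert y X"] X(3) y YX by auto
    qed
    ultimately show "Y \<in> bases (T (E - C) (L \<union> f -` f ` (C - L)) f (r - cl C L f))"
      using core[of Y] YX by auto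
  next
    fix Y assume Y: "Y \<in> bases (T (E - C) (L \<union> f -` f ` (C - L)) f (r - cl C L f))"
    then have YE: "Y \<subseteq> E - C" by (auto simp: bases_T)
    have P: "r \<le> ?g Y \<and> (\<forall>y\<in>Y. ?g (Y - {y}) < r)" using core[OF YE] Y by blast
    let ?X = "(E - C) - Y"
    have YX: "Y = (E - C) - ?X" using YE by auto
    have "indep ?D ?X" using ind[of ?X] P YX by auto
    moreover have "\<not> indep ?D (insert x ?X)" if x: "x \<in> E - C - ?X" for x
    proof -
      have "insert x ?X \<subseteq> E - C" and "(E - C) - insert x ?X = Y - {x}" using x YE by auto
      then show ?thesis using ind[of "insert x ?X"] P x by auto
    qed
    ultimately show "Y \<in> bases (contract (T E L f r) C)"
      unfolding bc using YX by (intro image_eqI[of _ _ ?X]) auto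
  qed
qed

lemma T_contract_r:
  assumes fin: "finite E" and r: "r \<le> cl E L f" and C: "C \<subseteq> E"
  shows "r - cl C L f \<le> cl (E - C) (L \<union> f -` f ` (C - L)) f"
proof -
  have eq: "f ` ((E - C) - (L \<union> f -` f ` (C - L))) = f ` (E - L) - f ` (C - L)" using C by auto
  have "card (f ` (E - L)) - card (f ` (C - L)) \<le> card (f ` (E - L) - f ` (C - L))"
    by (rule diff_card_le_card_Diff) (use fin finite_subset[OF C fin] in auto)
  then show ?thesis using r unfolding cl_def eq by linarith
qed


lemma binaryI: "(\<And>I. I \<subseteq> ground M \<Longrightarrow> indep M I \<longleftrightarrow> gf2_indep phi I) \<Longrightarrow> binary M"
  unfolding binary_def by blast

lemma gf2D: "gf2_indep phi I \<Longrightarrow> S \<subseteq> I \<Longrightarrow> S \<noteq> {} \<Longrightarrow> \<exists>k. odd (card {e\<in>S. phi e k})"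
  unfolding gf2_indep_def by blast

lemma gf2_single_bad: "gf2_indep phi I \<Longrightarrow> e \<in> I \<Longrightarrow> \<forall>k. \<not> phi e k \<Longrightarrow> False"
proof -
  assume a: "gf2_indep phi I" "e \<in> I" "\<forall>k. \<not> phi e k"
  then obtain k where "odd (card {e'\<in>{e}. phi e' k})" using gf2D[of phi I "{e}"] by auto
  moreover have "{e'\<in>{e}. phi e' k} = {}" using a by auto
  ultimately show False by (metis card.empty even_zero)
qed

lemma gf2_pair_bad: "gf2_indep phi I \<Longrightarrow> a \<in> I \<Longrightarrow> b \<in> I \<Longrightarrow> a \<noteq> b \<Longrightarrow> \<forall>k. phi a k = phi b k \<Longrightarrow> False"
proof -
  assume g: "gf2_indep phi I" and ab: "a \<in> I" "b \<in> I" "a \<noteq> b" "\<forall>k. phi a k = phi b k"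
  obtain k where "odd (card {e\<in>{a,b}. phi e k})" using gf2D[OF g, of "{a,b}"] ab by auto
  moreover have "{e\<in>{a,b}. phi e k} = (if phi a k then {a,b} else {})" using ab by auto
  ultimately show False using ab by (auto split: if_splits)
qed

lemma odd_single: "{e\<in>S. P e} = {a} \<Longrightarrow> odd (card {e\<in>S. P e})" by simp

lemma T0_bases: "finite E \<Longrightarrow> bases (T E L f 0) = {{}}"
proof -
  assume fin: "finite E"
  have h: "B = {}" if "B \<subseteq> E - L" "card B = 0" for B
  proof -
    have "finite B" using that fin finite_subset[of B E] by auto
    then show ?thesis using that(2) by simp
  qed
  show ?thesis unfolding bases_T
  proof (intro set_eqI iffI)
    fix x assume "x \<in> {B. B \<subseteq> E - L \<and> card B = 0 \<and> inj_on f B}"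
    then show "x \<in> {{}}" using h[of x] by simp
  qed simp
qed

lemma binary_T0: assumes fin: "finite E" shows "binary (T E L f 0)"
proof (rule binaryI[where phi = "\<lambda>e k. False"])
  fix I assume I: "I \<subseteq> ground (T E L f 0)"
  have "indep (T E L f 0) I \<longleftrightarrow> I = {}" unfolding indep_def T0_bases[OF fin] by simp
  moreover have "gf2_indep (\<lambda>e k. False) I \<longleftrightarrow> I = {}"
  proof
    assume "gf2_indep (\<lambda>e k. False) I"
    then show "I = {}" unfolding gf2_indep_def by force
  qed (simp add: gf2_indep_def)
  ultimately show "indep (T E L f 0) I \<longleftrightarrow> gf2_indep (\<lambda>e k. False) I" by simp
qed

lemma binary_Tm:
  assumes fin: "finite E" and r: "r = cl E L f"
  shows "binary (T E L f r)"
proof (rule binaryI[where phi = "\<lambda>e k. e \<notin> L \<and> k = f e"])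
  fix I assume I: "I \<subseteq> ground (T E L f r)"
  then have IE: "I \<subseteq> E" by simp
  have finI: "finite I" using IE fin finite_subset by blast
  have ind: "indep (T E L f r) I \<longleftrightarrow> I \<subseteq> E - L \<and> inj_on f I \<and> card I \<le> r"
    using T_indep[OF fin] r by simp
  show "indep (T E L f r) I \<longleftrightarrow> gf2_indep (\<lambda>e k. e \<notin> L \<and> k = f e) I"
  proof
    assume "indep (T E L f r) I"
    then have A: "I \<inter> L = {}" "inj_on f I" using ind by auto
    show "gf2_indep (\<lambda>e k. e \<notin> L \<and> k = f e) I"
      unfolding gf2_indep_def
    proof (intro allI impI)
      fix S assume S: "S \<subseteq> I" "S \<noteq> {}"
      then obtain e where e: "e \<in> S" by blast
      have "{e'\<in>S. e' \<notin> L \<and> f e = f e'} = {e}"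
        using A S e by (auto simp: inj_on_def)
      then show "\<exists>k. odd (card {e'\<in>S. e' \<notin> L \<and> k = f e'})" by (intro exI[of _ "f e"]) simp
    qed
  next
    assume g: "gf2_indep (\<lambda>e k. e \<notin> L \<and> k = f e) I"
    have IL: "I \<subseteq> E - L"
    proof
      fix e assume "e \<in> I"
      then show "e \<in> E - L" using gf2_single_bad[OF g, of e] IE by auto
    qed
    have inj: "inj_on f I"
    proof (rule inj_onI, rule ccontr)
      fix a b assume ab: "a \<in> I" "b \<in> I" "f a = f b" "a \<noteq> b"
      show False using gf2_pair_bad[OF g ab(1,2,4)] ab IL by auto
    qed
    have "card I = card (f ` I)" using inj card_image by metis
    also have "\<dots> \<le> card (f ` (E - L))" using IL fin by (intro card_mono) auto
    finally show "indep (T E L f r) I" using ind IL inj r unfolding cl_def by simp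
  qed
qed

lemma binary_Tm1:
  assumes fin: "finite E" and r: "r + 1 = cl E L f"
  shows "binary (T E L f r)"
proof -
  have "f ` (E - L) \<noteq> {}"
  proof
    assume e: "f ` (E - L) = {}"
    have "cl E L f = 0" unfolding cl_def e by (rule card.empty)
    then show False using r by simp
  qed
  then obtain c0 where c0: "c0 \<in> f ` (E - L)" by blast
  define phi where "phi = (\<lambda>e k. e \<notin> L \<and> (if f e = c0 then k \<in> f ` (E - L) \<and> k \<noteq> c0 else k = f e))"
  have rle: "r \<le> cl E L f" using r by simp
  show ?thesis
  proof (rule binaryI[where phi = phi])
    fix I assume I: "I \<subseteq> ground (T E L f r)"
    then have IE: "I \<subseteq> E" by simp
    have finI: "finite I" using IE fin finite_subset by blast
    have ind: "indep (T E L f r) I \<longleftrightarrow> I \<subseteq> E - L \<and> inj_on f I \<and> card I \<le> r"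
      using T_indep[OF fin rle] by simp
    show "indep (T E L f r) I \<longleftrightarrow> gf2_indep phi I"
    proof
      assume "indep (T E L f r) I"
      then have A: "I \<subseteq> E - L" "inj_on f I" "card I \<le> r" using ind by auto
      have "card (f ` I) < card (f ` (E - L))" using A r card_image[OF A(2)] unfolding cl_def by simp
      then have "f ` I \<noteq> f ` (E - L)" by auto
      then obtain c1 where c1: "c1 \<in> f ` (E - L)" "c1 \<notin> f ` I" using A by blast
      show "gf2_indep phi I"
        unfolding gf2_indep_def
      proof (intro allI impI)
        fix S assume S: "S \<subseteq> I" "S \<noteq> {}"
        show "\<exists>k. odd (card {e\<in>S. phi e k})"
        proof (cases "\<exists>e0\<in>S. f e0 = c0")
          case True
          then obtain e0 where e0: "e0 \<in> S" "f e0 = c0" by blast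
          have "c1 \<noteq> c0" using c1 e0 S by auto
          have "{e\<in>S. phi e c1} = {e0}"
            using A S e0 c1 \<open>c1 \<noteq> c0\<close> unfolding phi_def by (auto simp: inj_on_def)
          then show ?thesis by (intro exI[of _ c1]) simp
        next
          case False
          obtain e where e: "e \<in> S" using S by blast
          have "{e'\<in>S. phi e' (f e)} = {e}"
            using A S e False unfolding phi_def by (auto simp: inj_on_def)
          then show ?thesis by (intro exI[of _ "f e"]) simp
        qed
      qed
    next
      assume g: "gf2_indep phi I"
      have IL: "I \<subseteq> E - L"
      proof
        fix e assume "e \<in> I"
        then show "e \<in> E - L" using gf2_single_bad[OF g, of e] IE unfolding phi_def by auto
      qed
      have inj: "inj_on f I"
      proof (rule inj_onI, rule ccontr)
        fix a b assume ab: "a \<in> I" "b \<in> I" "f a = f b" "a \<noteq> b"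
        have "a \<notin> L" "b \<notin> L" using ab IL by auto
        then have "\<forall>k. phi a k = phi b k" unfolding phi_def using ab(3) by simp
        then show False using gf2_pair_bad[OF g ab(1,2,4)] by blast
      qed
      have "card I \<le> r"
      proof (rule ccontr)
        assume "\<not> card I \<le> r"
        moreover have "card I = card (f ` I)" using inj card_image by metis
        moreover have "card (f ` I) \<le> card (f ` (E - L))" using IL fin by (intro card_mono) auto
        ultimately have "card (f ` I) = card (f ` (E - L))" using r unfolding cl_def by linarith
        then have fI: "f ` I = f ` (E - L)" using IL fin
          by (intro card_subset_eq) auto
        then have "c0 \<in> f ` I" using c0 by simp
        then obtain e0 where e0: "e0 \<in> I" "f e0 = c0" by (metis imageE)
        have "even (card {e\<in>I. phi e k})" for k
        proof (cases "k \<in> f ` (E - L) \<and> k \<noteq> c0")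
          case True
          then have "k \<in> f ` I" using fI by simp
          then obtain ek where ek: "ek \<in> I" "f ek = k" by (metis imageE)
          have "ek \<noteq> e0" using ek e0 True by auto
          have "{e\<in>I. phi e k} = {ek, e0}"
            using ek e0 True IL inj unfolding phi_def by (auto simp: inj_on_def)
          then show ?thesis using \<open>ek \<noteq> e0\<close> by simp
        next
          case False
          have "{e\<in>I. phi e k} = {}" using False IL unfolding phi_def by auto
          then show ?thesis by (metis card.empty even_zero)
        qed
        moreover have "I \<noteq> {}" using e0 by auto
        ultimately show False using gf2D[OF g, of I] by auto
      qed
      then show "indep (T E L f r) I" using ind IL inj by simp
    qed
  qed
qed


lemma odd_card_single: "A = {a} \<Longrightarrow> odd (card A)" by simp
lemma even_card_pair: "A = {a, b} \<Longrightarrow> a \<noteq> b \<Longrightarrow> even (card A)" by simp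
lemma even_card_empty: "A = {} \<Longrightarrow> even (card A)" by simp

lemma binary_dual_T0: assumes fin: "finite E" shows "binary (dual (T E L f 0))"
proof (rule binaryI[where phi = "\<lambda>e k. k = e"])
  fix I assume I: "I \<subseteq> ground (dual (T E L f 0))"
  have "indep (dual (T E L f 0)) I"
    using I unfolding indep_def bases_dual T0_bases[OF fin] by auto
  moreover have "gf2_indep (\<lambda>e k. k = e) I"
    unfolding gf2_indep_def
  proof (intro allI impI)
    fix S :: "nat set" assume "S \<subseteq> I" "S \<noteq> {}"
    then obtain e where e: "e \<in> S" by blast
    have "{e'\<in>S. e = e'} = {e}" using e by auto
    then have "odd (card {e'\<in>S. e = e'})" by (rule odd_card_single)
    then show "\<exists>k. odd (card {e'\<in>S. k = e'})" by blast
  qed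
  ultimately show "indep (dual (T E L f 0)) I \<longleftrightarrow> gf2_indep (\<lambda>e k. k = e) I" by simp
qed


locale dflag =
  fixes E L :: "nat set" and g :: "nat \<Rightarrow> nat" and b :: bool
  assumes fin: "finite E"
begin

definition "P = E - L"
definition "rho c = (SOME e. e \<in> P \<and> g e = c)"
definition "isrep e \<longleftrightarrow> e \<in> P \<and> rho (g e) = e"
definition "phi e k \<longleftrightarrow> (\<not> isrep e \<and> k = Suc e) \<or>
   (isrep e \<and> ((\<exists>k'. k = Suc k' \<and> k' \<in> P \<and> \<not> isrep k' \<and> g k' = g e) \<or> (b \<and> k = 0)))"
definition "Full X = {c \<in> g ` P. \<forall>e\<in>P. g e = c \<longrightarrow> e \<in> X}"

lemma rho: "c \<in> g ` P \<Longrightarrow> rho c \<in> P \<and> g (rho c) = c"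
  unfolding rho_def by (rule someI_ex) auto

lemma rho_rep: "c \<in> g ` P \<Longrightarrow> isrep (rho c)"
  using rho unfolding isrep_def by auto

lemma isrepD: "isrep e \<Longrightarrow> rho (g e) = e \<and> e \<in> P"
  unfolding isrep_def by auto

lemma finP: "finite P" unfolding P_def using fin by simp

lemma phi0: "phi e 0 \<longleftrightarrow> isrep e \<and> b" unfolding phi_def by auto

lemma phiS: "phi e (Suc k') \<longleftrightarrow> (\<not> isrep e \<and> k' = e) \<or>
   (isrep e \<and> k' \<in> P \<and> \<not> isrep k' \<and> g k' = g e)" unfolding phi_def by auto

lemma inj_rho: "inj_on rho (g ` P)"
  by (rule inj_onI) (metis rho)

lemma claimA:
  assumes X: "X \<subseteq> E" and Cs: "Cs \<subseteq> Full X" "Cs \<noteq> {}" and b2: "b \<longrightarrow> card Cs = 2"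
  shows "\<not> gf2_indep phi X"
proof
  assume gf: "gf2_indep phi X"
  define S where "S = {e\<in>P. g e \<in> Cs}"
  have CsP: "Cs \<subseteq> g ` P" using Cs unfolding Full_def by auto
  have SX: "S \<subseteq> X" using Cs unfolding S_def Full_def by auto
  have Sne: "S \<noteq> {}"
  proof -
    obtain c where "c \<in> Cs" using Cs by blast
    then have "rho c \<in> S" using rho CsP unfolding S_def by auto
    then show ?thesis by auto
  qed
  have ev: "even (card {e\<in>S. phi e k})" for k
  proof (cases k)
    case 0
    show ?thesis
    proof (cases b)
      case True
      have "{e\<in>S. phi e k} = rho ` Cs"
      proof (intro set_eqI iffI)
        fix e assume "e \<in> {e\<in>S. phi e k}"
        then have "e \<in> S" "isrep e" using 0 phi0 by auto
        then show "e \<in> rho ` Cs" using isrepD[of e] unfolding S_def by (auto intro!: image_eqI[of e rho "g e"])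
      next
        fix e assume "e \<in> rho ` Cs"
        then obtain c where c: "c \<in> Cs" "e = rho c" by blast
        then have "e \<in> S" "isrep e" using rho rho_rep CsP unfolding S_def by auto
        then show "e \<in> {e\<in>S. phi e k}" using 0 phi0 True by auto
      qed
      moreover have "card (rho ` Cs) = card Cs" using inj_on_subset[OF inj_rho CsP] card_image by blast
      ultimately show ?thesis using b2 True by simp
    next
      case False
      have "{e\<in>S. phi e k} = {}" using 0 phi0 False by auto
      then show ?thesis by (rule even_card_empty)
    qed
  next
    case (Suc k')
    show ?thesis
    proof (cases "k' \<in> S \<and> \<not> isrep k'")
      case True
      have gk: "g k' \<in> Cs" "k' \<in> P" using True unfolding S_def by auto
      have r: "rho (g k') \<in> S" "isrep (rho (g k'))" using rho[of "g k'"] rho_rep[of "g k'"] gk CsP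
        unfolding S_def by auto
      have "{e\<in>S. phi e k} = {k', rho (g k')}"
      proof (intro set_eqI iffI)
        fix e assume "e \<in> {e\<in>S. phi e k}"
        then have "e \<in> S" "phi e (Suc k')" using Suc by auto
        then show "e \<in> {k', rho (g k')}" unfolding phiS using isrepD by auto
      next
        fix e assume "e \<in> {k', rho (g k')}"
        then show "e \<in> {e\<in>S. phi e k}" using True r gk rho[of "g k'"] CsP unfolding Suc phiS by auto
      qed
      moreover have "k' \<noteq> rho (g k')" using True r by auto
      ultimately show ?thesis by (rule even_card_pair)
    next
      case False
      have "{e\<in>S. phi e k} = {}"
      proof (intro set_eqI iffI)
        fix e assume "e \<in> {e\<in>S. phi e k}"
        then have e: "e \<in> S" "phi e (Suc k')" using Suc by auto
        show "e \<in> {}"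
        proof (cases "isrep e")
          case True
          then have "k' \<in> P" "\<not> isrep k'" "g k' = g e" using e(2) unfolding phiS by auto
          then have "k' \<in> S" using e(1) unfolding S_def by auto
          then show ?thesis using False \<open>\<not> isrep k'\<close> by auto
        next
          case False
          then have "k' = e" using e(2) unfolding phiS by auto
          then show ?thesis using e(1) False \<open>\<not> (k' \<in> S \<and> \<not> isrep k')\<close> by auto
        qed
      qed simp
      then show ?thesis by (rule even_card_empty)
    qed
  qed
  obtain k where "odd (card {e\<in>S. phi e k})" using gf2D[OF gf SX Sne] by blast
  then show False using ev by blast
qed

lemma claimB:
  assumes X: "X \<subseteq> E" and ng: "\<not> gf2_indep phi X"
  shows "(\<not> b \<longrightarrow> Full X \<noteq> {}) \<and> (b \<longrightarrow> card (Full X) \<ge> 2)"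
proof -
  obtain S where S: "S \<subseteq> X" "S \<noteq> {}" and ev: "\<And>k. even (card {e\<in>S. phi e k})"
    using ng unfolding gf2_indep_def by blast
  have i: "e \<in> P \<and> rho (g e) \<in> S" if e: "e \<in> S" for e
  proof (cases "isrep e")
    case True
    then show ?thesis using isrepD[OF True] e by auto
  next
    case False
    show ?thesis
    proof (rule ccontr)
      assume nn: "\<not> (e \<in> P \<and> rho (g e) \<in> S)"
      have "{e'\<in>S. phi e' (Suc e)} = {e}"
      proof (intro set_eqI iffI)
        fix e' assume "e' \<in> {e'\<in>S. phi e' (Suc e)}"
        then have e': "e' \<in> S" "phi e' (Suc e)" by auto
        show "e' \<in> {e}"
        proof (cases "isrep e'")
          case True
          then have "e \<in> P" "g e = g e'" using e'(2) unfolding phiS by auto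
          then have "rho (g e) \<in> S" using isrepD[OF True] e'(1) by auto
          then show ?thesis using nn \<open>e \<in> P\<close> by auto
        next
          case False
          then show ?thesis using e'(2) unfolding phiS by auto
        qed
      next
        fix e' assume "e' \<in> {e}"
        then show "e' \<in> {e'\<in>S. phi e' (Suc e)}" using e False unfolding phiS by auto
      qed
      then show False using ev[of "Suc e"] by simp
    qed
  qed
  have ii: "e2 \<in> S" if e: "e \<in> S" and e2: "e2 \<in> P" "g e2 = g e" for e e2
  proof (cases "isrep e2")
    case True
    then show ?thesis using isrepD[OF True] i[OF e] e2 by auto
  next
    case False
    show ?thesis
    proof (rule ccontr)
      assume n2: "e2 \<notin> S"
      let ?r = "rho (g e)"
      have rS: "?r \<in> S" and rr: "isrep ?r" and gr: "g ?r = g e"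
        using i[OF e] rho_rep[of "g e"] rho[of "g e"] by auto
      have "{e'\<in>S. phi e' (Suc e2)} = {?r}"
      proof (intro set_eqI iffI)
        fix e' assume "e' \<in> {e'\<in>S. phi e' (Suc e2)}"
        then have e': "e' \<in> S" "phi e' (Suc e2)" by auto
        show "e' \<in> {?r}"
        proof (cases "isrep e'")
          case True
          then have "g e2 = g e'" using e'(2) unfolding phiS by auto
          then show ?thesis using isrepD[OF True] e2 by auto
        next
          case False
          then show ?thesis using e'(2) n2 e'(1) unfolding phiS by auto
        qed
      next
        fix e' assume "e' \<in> {?r}"
        then show "e' \<in> {e'\<in>S. phi e' (Suc e2)}" using rS rr gr e2 False unfolding phiS by auto
      qed
      then show False using ev[of "Suc e2"] by simp
    qed
  qed
  define Cs where "Cs = g ` S"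
  have CsF: "Cs \<subseteq> Full X"
  proof
    fix c assume "c \<in> Cs"
    then obtain e where e: "e \<in> S" "c = g e" unfolding Cs_def by blast
    have "c \<in> g ` P" using i[OF e(1)] e(2) by blast
    moreover have "\<forall>e2\<in>P. g e2 = c \<longrightarrow> e2 \<in> X" using ii[OF e(1)] e(2) S(1) by blast
    ultimately show "c \<in> Full X" unfolding Full_def by blast
  qed
  have Csne: "Cs \<noteq> {}" using S unfolding Cs_def by auto
  have CsP: "Cs \<subseteq> g ` P" using i unfolding Cs_def by auto
  have finF: "finite (Full X)" unfolding Full_def using finP by auto
  show ?thesis
  proof (intro conjI impI)
    assume "\<not> b" then show "Full X \<noteq> {}" using CsF Csne by auto
  next
    assume bb: b
    have "{e\<in>S. phi e 0} = rho ` Cs"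
    proof (intro set_eqI iffI)
      fix e assume "e \<in> {e\<in>S. phi e 0}"
      then have "e \<in> S" "isrep e" using phi0 by auto
      then show "e \<in> rho ` Cs" unfolding Cs_def using isrepD[of e] by (auto intro!: image_eqI[of e rho "g e"])
    next
      fix e assume "e \<in> rho ` Cs"
      then obtain e0 where e0: "e0 \<in> S" "e = rho (g e0)" unfolding Cs_def by blast
      then show "e \<in> {e\<in>S. phi e 0}" using i[OF e0(1)] rho_rep[of "g e0"] phi0 bb by auto
    qed
    moreover have "card (rho ` Cs) = card Cs" using inj_on_subset[OF inj_rho CsP] card_image by blast
    ultimately have "even (card Cs)" using ev[of 0] by simp
    moreover have "card Cs \<noteq> 0" using Csne CsP finP by (metis card_0_eq finite_imageI finite_subset)
    ultimately have "card Cs \<ge> 2" by presburger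
    then show "card (Full X) \<ge> 2" using card_mono[OF finF CsF] by linarith
  qed
qed

end


context dflag begin

lemma cl_Full: "X \<subseteq> E \<Longrightarrow> cl (E - X) L g = card (g ` P) - card (Full X)"
proof -
  assume X: "X \<subseteq> E"
  have eq: "g ` (E - X - L) = g ` P - Full X"
  proof (intro set_eqI iffI)
    fix c assume "c \<in> g ` (E - X - L)"
    then obtain e where e: "e \<in> E - X - L" "c = g e" by blast
    then show "c \<in> g ` P - Full X" unfolding P_def Full_def by auto
  next
    fix c assume c: "c \<in> g ` P - Full X"
    then obtain e where "e \<in> P" "g e = c" "e \<notin> X" unfolding Full_def by auto
    then show "c \<in> g ` (E - X - L)" unfolding P_def by auto
  qed
  have "Full X \<subseteq> g ` P" unfolding Full_def by auto
  moreover have "finite (Full X)" unfolding Full_def using finP by auto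
  ultimately show ?thesis unfolding cl_def eq by (simp add: card_Diff_subset)
qed

lemma binary_dual:
  assumes r: "if b then r + 1 = cl E L g else r = cl E L g"
  shows "binary (dual (T E L g r))"
proof (rule binaryI[where phi = phi])
  have rle: "r \<le> cl E L g" using r by (auto split: if_splits)
  have m: "cl E L g = card (g ` P)" unfolding cl_def P_def by simp
  fix X assume "X \<subseteq> ground (dual (T E L g r))"
  then have X: "X \<subseteq> E" by simp
  have finF: "finite (Full X)" unfolding Full_def using finP by auto
  have FP: "card (Full X) \<le> card (g ` P)" using finP unfolding Full_def by (intro card_mono) auto
  have ind: "indep (dual (T E L g r)) X \<longleftrightarrow> r \<le> card (g ` P) - card (Full X)"
    using T_dual_indep[OF fin rle, of X] X cl_Full[OF X] by simp
  show "indep (dual (T E L g r)) X \<longleftrightarrow> gf2_indep phi X"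
  proof (cases b)
    case True
    then have r1: "r + 1 = card (g ` P)" using r m by simp
    have "indep (dual (T E L g r)) X \<longleftrightarrow> card (Full X) \<le> 1" using ind r1 FP by linarith
    moreover have "gf2_indep phi X \<longleftrightarrow> card (Full X) \<le> 1"
    proof
      assume g: "gf2_indep phi X"
      show "card (Full X) \<le> 1"
      proof (rule ccontr)
        assume "\<not> card (Full X) \<le> 1"
        then have "2 \<le> card (Full X)" by simp
        then obtain Cs where Cs: "Cs \<subseteq> Full X" "card Cs = 2"
          using obtain_subset_with_card_n by metis
        then have "Cs \<noteq> {}" by auto
        then show False using claimA[OF X Cs(1)] Cs g by blast
      qed
    next
      assume "card (Full X) \<le> 1"
      then show "gf2_indep phi X" using claimB[OF X] True by fastforce
    qed
    ultimately show ?thesis by simp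
  next
    case False
    then have r1: "r = card (g ` P)" using r m by simp
    have FsP: "Full X \<subseteq> g ` P" unfolding Full_def by auto
    have "r \<le> card (g ` P) - card (Full X) \<longleftrightarrow> Full X = {}"
    proof
      assume a: "r \<le> card (g ` P) - card (Full X)"
      show "Full X = {}"
      proof (rule ccontr)
        assume "Full X \<noteq> {}"
        then have "card (Full X) > 0" using finF by auto
        moreover have "card (Full X) \<le> card (g ` P)" by (rule FP)
        ultimately show False using a r1 by linarith
      qed
    qed (use r1 in simp)
    then have "indep (dual (T E L g r)) X \<longleftrightarrow> Full X = {}" using ind by simp
    moreover have "gf2_indep phi X \<longleftrightarrow> Full X = {}"
    proof
      assume g: "gf2_indep phi X"
      show "Full X = {}"
      proof (rule ccontr)
        assume "Full X \<noteq> {}"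
        then obtain c where "c \<in> Full X" by blast
        then show False using claimA[OF X, of "{c}"] False g by auto
      qed
    next
      assume "Full X = {}"
      then show "gf2_indep phi X" using claimB[OF X] False by blast
    qed
    ultimately show ?thesis by simp
  qed
qed

end

lemma binary_dual_Tm:
  assumes fin: "finite E" and r: "r = cl E L g"
  shows "binary (dual (T E L g r))"
proof -
  interpret dflag E L g False using fin by unfold_locales
  show ?thesis using binary_dual r by simp
qed

lemma binary_dual_Tm1:
  assumes fin: "finite E" and r: "r + 1 = cl E L g"
  shows "binary (dual (T E L g r))"
proof -
  interpret dflag E L g True using fin by unfold_locales
  show ?thesis using binary_dual r by simp
qed


definition chc :: "nat matroid \<Rightarrow> nat set \<Rightarrow> nat \<Rightarrow> bool" where
  "chc M H r \<longleftrightarrow> finite (ground M) \<and> bases M \<subseteq> Pow (ground M) \<and> (\<forall>B\<in>bases M. card B = r) \<and>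
     H \<subseteq> ground M \<and> card H = r \<and> H \<notin> bases M \<and> H \<noteq> {} \<and> ground M - H \<noteq> {} \<and>
     (\<forall>x\<in>H. \<forall>y\<in>ground M - H. insert y (H - {x}) \<in> bases M)"

lemma rank_fin: "(\<And>J. indep M J \<Longrightarrow> card J \<le> r) \<Longrightarrow> finite {card I | I. I \<subseteq> X \<and> indep M I}"
  by (rule finite_subset[of _ "{..r}"]) auto

lemma rank_ge: "(\<And>J. indep M J \<Longrightarrow> card J \<le> r) \<Longrightarrow> I \<subseteq> X \<Longrightarrow> indep M I \<Longrightarrow> card I \<le> rank M X"
  unfolding rank_def by (rule Max_ge[OF rank_fin]) auto

lemma rank_le: "(\<And>J. indep M J \<Longrightarrow> card J \<le> r) \<Longrightarrow> (\<And>I. I \<subseteq> X \<Longrightarrow> indep M I \<Longrightarrow> card I \<le> n)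
   \<Longrightarrow> Iz \<subseteq> X \<Longrightarrow> indep M Iz \<Longrightarrow> rank M X \<le> n"
proof -
  assume b: "\<And>J. indep M J \<Longrightarrow> card J \<le> r" and h: "\<And>I. I \<subseteq> X \<Longrightarrow> indep M I \<Longrightarrow> card I \<le> n"
    and Iz: "Iz \<subseteq> X" "indep M Iz"
  have "{card I | I. I \<subseteq> X \<and> indep M I} \<noteq> {}" using Iz by auto
  then show "rank M X \<le> n" unfolding rank_def using rank_fin[OF b] h by (subst Max_le_iff) auto
qed

lemma chc_CH:
  assumes c: "chc M H r"
  shows "circuit_hyperplane M H"
proof -
  let ?E = "ground M"
  have fE: "finite ?E" and BP: "bases M \<subseteq> Pow ?E" and cB: "\<And>B. B \<in> bases M \<Longrightarrow> card B = r"
    and HE: "H \<subseteq> ?E" and cH: "card H = r" and Hn: "H \<notin> bases M" and Hne: "H \<noteq> {}"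
    and EH: "?E - H \<noteq> {}" and ex: "\<And>x y. x \<in> H \<Longrightarrow> y \<in> ?E - H \<Longrightarrow> insert y (H - {x}) \<in> bases M"
    using c unfolding chc_def by auto
  have finB: "finite B" if "B \<in> bases M" for B using that BP fE finite_subset by blast
  have bnd: "card I \<le> r" if ii: "indep M I" for I
  proof -
    obtain B where "B \<in> bases M" "I \<subseteq> B" using ii unfolding indep_def by blast
    then show ?thesis using cB finB card_mono by metis
  qed
  have isb: "I \<in> bases M" if ii: "indep M I" "card I = r" for I
  proof -
    obtain B where "B \<in> bases M" "I \<subseteq> B" using ii unfolding indep_def by blast
    then have "I = B" using cB finB ii(2) by (metis card_subset_eq)
    then show ?thesis using \<open>B \<in> bases M\<close> by simp
  qed
  have finH: "finite H" using HE fE finite_subset by blast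
  have r1: "r \<ge> 1" using cH Hne finH by (metis One_nat_def Suc_leI card_gt_0_iff)
  obtain x0 where x0: "x0 \<in> H" using Hne by blast
  obtain y0 where y0: "y0 \<in> ?E - H" using EH by blast
  have nH: "\<not> indep M H" using isb cH Hn by blast
  have indx: "indep M (H - {x})" if "x \<in> H" for x
    using ex[OF that y0] unfolding indep_def by blast
  have circ: "circuit M H" unfolding circuit_def using HE nH indx by blast
  have rE: "rank M ?E = r"
  proof (rule antisym)
    have b0: "insert y0 (H - {x0}) \<in> bases M" using ex x0 y0 by blast
    show "rank M ?E \<le> r"
      by (rule rank_le[OF bnd, where Iz="{}"]) (use bnd b0 in \<open>auto simp: indep_def\<close>)
  next
    have b0: "insert y0 (H - {x0}) \<in> bases M" using ex x0 y0 by blast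
    have "card (insert y0 (H - {x0})) \<le> rank M ?E"
      by (rule rank_ge[OF bnd]) (use b0 BP in \<open>auto simp: indep_def\<close>)
    then show "r \<le> rank M ?E" using cB[OF b0] by simp
  qed
  have cHx: "card (H - {x0}) = r - 1" using x0 cH finH by simp
  have rH: "rank M H = r - 1"
  proof (rule antisym)
    show "rank M H \<le> r - 1"
    proof (rule rank_le[OF bnd, where Iz="H - {x0}"])
      fix I assume I: "I \<subseteq> H" "indep M I"
      have "card I \<noteq> r"
      proof
        assume "card I = r"
        then have "I = H" using I cH finH by (metis card_subset_eq)
        then show False using I nH by simp
      qed
      then show "card I \<le> r - 1" using bnd[OF I(2)] by simp
    qed (use indx x0 in auto)
    have "card (H - {x0}) \<le> rank M H" by (rule rank_ge[OF bnd]) (use indx x0 in auto)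
    then show "r - 1 \<le> rank M H" using cHx by simp
  qed
  have hyp: "hyperplane M H"
    unfolding hyperplane_def
  proof (intro conjI ballI)
    show "H \<subseteq> ?E" by (rule HE)
    show "rank M H + 1 = rank M ?E" using rH rE r1 by simp
    fix y assume y: "y \<in> ?E - H"
    have b1: "insert y (H - {x0}) \<in> bases M" using ex x0 y by blast
    have "card (insert y (H - {x0})) \<le> rank M (insert y H)"
      by (rule rank_ge[OF bnd]) (use b1 in \<open>auto simp: indep_def\<close>)
    then have "r \<le> rank M (insert y H)" using cB[OF b1] by simp
    then show "rank M H < rank M (insert y H)" using rH r1 by simp
  qed
  show ?thesis unfolding circuit_hyperplane_def using circ hyp by simp
qed

lemma chc_dual:
  assumes c: "chc M H r"
  shows "chc (dual M) (ground M - H) (card (ground M) - r)"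
proof -
  let ?E = "ground M"
  have fE: "finite ?E" and BP: "bases M \<subseteq> Pow ?E" and cB: "\<And>B. B \<in> bases M \<Longrightarrow> card B = r"
    and HE: "H \<subseteq> ?E" and cH: "card H = r" and Hn: "H \<notin> bases M" and Hne: "H \<noteq> {}"
    and EH: "?E - H \<noteq> {}" and ex: "\<And>x y. x \<in> H \<Longrightarrow> y \<in> ?E - H \<Longrightarrow> insert y (H - {x}) \<in> bases M"
    using c unfolding chc_def by auto
  show ?thesis unfolding chc_def
  proof (intro conjI ballI)
    show "finite (ground (dual M))" using fE by simp
    show "bases (dual M) \<subseteq> Pow (ground (dual M))" by (auto simp: bases_dual)
    fix B assume "B \<in> bases (dual M)"
    then obtain B0 where B0: "B0 \<in> bases M" "B = ?E - B0" by (auto simp: bases_dual)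
    then have "B0 \<subseteq> ?E" using BP by auto
    then have "card (?E - B0) = card ?E - card B0" using fE finite_subset by (metis card_Diff_subset)
    then show "card B = card ?E - r" using cB[OF B0(1)] B0(2) by simp
  next
    show "?E - H \<subseteq> ground (dual M)" by simp
    show "card (?E - H) = card ?E - r" using cH HE fE finite_subset by (metis card_Diff_subset)
    show "?E - H \<notin> bases (dual M)"
    proof
      assume "?E - H \<in> bases (dual M)"
      then obtain B0 where B0: "B0 \<in> bases M" "?E - H = ?E - B0" by (auto simp: bases_dual)
      then have "H = B0" using HE BP by blast
      then show False using Hn B0 by simp
    qed
    show "?E - H \<noteq> {}" by (rule EH)
    show "ground (dual M) - (?E - H) \<noteq> {}" using Hne HE by auto
  next
    fix x y assume x: "x \<in> ?E - H" and y: "y \<in> ground (dual M) - (?E - H)"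
    then have y': "y \<in> H" using HE by auto
    have "insert y ((?E - H) - {x}) = ?E - insert x (H - {y})" using x y' HE by auto
    moreover have "insert x (H - {y}) \<in> bases M" using ex[OF y' x] .
    ultimately show "insert y ((?E - H) - {x}) \<in> bases (dual M)" by (auto simp: bases_dual)
  qed
qed

lemma ground_relax[simp]: "ground (relax N H) = ground N" by (simp add: relax_def ground_def)
lemma bases_relax: "bases (relax N H) = insert H (bases N)" by (simp add: relax_def bases_def)


lemma inR_binary: "is_matroid M \<Longrightarrow> binary M \<Longrightarrow> in_R M" unfolding in_R_def by blast

lemma inR_relax: "is_matroid M \<Longrightarrow> is_matroid N \<Longrightarrow> binary N \<Longrightarrow> circuit_hyperplane N H \<Longrightarrow> M = relax N H \<Longrightarrow> in_R M"
  unfolding in_R_def by blast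

lemma dual_relax: "dual (relax N H) = relax (dual N) (ground N - H)"
  by (rule matroid_eqI) (simp_all add: bases_dual bases_relax)

lemma special:
  assumes fin: "finite E" and m: "cl E {} f = 4" and pq: "p \<in> E" "q \<in> E" "f p \<noteq> f q"
    and sp: "\<And>e. e \<in> E \<Longrightarrow> f e = f p \<Longrightarrow> e = p" and sq: "\<And>e. e \<in> E \<Longrightarrow> f e = f q \<Longrightarrow> e = q"
  shows "in_R (T E {} f 2) \<and> in_R (dual (T E {} f 2))"
proof -
  define f' where "f' = (\<lambda>e. if e = q then f p else f e)"
  have pnq: "p \<noteq> q" using pq by auto
  have img: "f' ` E = f ` E - {f q}"
  proof (intro set_eqI iffI)
    fix c assume "c \<in> f' ` E"
    then obtain e where e: "e \<in> E" "c = f' e" by blast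
    show "c \<in> f ` E - {f q}"
    proof (cases "e = q")
      case True then show ?thesis using e pq unfolding f'_def by auto
    next
      case False then show ?thesis using e sq unfolding f'_def by fastforce
    qed
  next
    fix c assume "c \<in> f ` E - {f q}"
    then obtain e where e: "e \<in> E" "c = f e" "f e \<noteq> f q" by blast
    then have "e \<noteq> q" by auto
    then show "c \<in> f' ` E" using e unfolding f'_def by (auto intro!: image_eqI[of _ _ e])
  qed
  have "cl E {} f' = card (f ` E - {f q})" unfolding cl_def using img by simp
  also have "\<dots> = card (f ` E) - 1" using pq fin by (simp add: card_Diff_singleton)
  finally have m3: "cl E {} f' = 3" using m unfolding cl_def by simp
  define N where "N = T E {} f' 2"
  define H where "H = {p, q}"
  have cH: "card H = 2" unfolding H_def using pnq by simp
  have HE: "H \<subseteq> E" unfolding H_def using pq by auto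
  have card2: "card B = 2 \<longleftrightarrow> (\<exists>a b. B = {a, b} \<and> a \<noteq> b)" for B :: "nat set"
    by (rule card_2_iff)
  have bT: "bases (T E {} f 2) = insert H (bases N)"
  proof (intro set_eqI iffI)
    fix B assume "B \<in> bases (T E {} f 2)"
    then have B: "B \<subseteq> E" "card B = 2" "inj_on f B" by (auto simp: bases_T)
    then obtain a b where ab: "B = {a, b}" "a \<noteq> b" using card2 by blast
    have fab: "f a \<noteq> f b" using B(3) ab by auto
    show "B \<in> insert H (bases N)"
    proof (cases "B = H")
      case True then show ?thesis by simp
    next
      case False
      have "f' a \<noteq> f' b"
      proof
        assume eq: "f' a = f' b"
        have aE: "a \<in> E" and bE: "b \<in> E" using B ab by auto
        show False
        proof (cases "a = q")
          case True
          then have "b \<noteq> q" using ab by simp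
          then have "f b = f p" using eq True unfolding f'_def by simp
          then have "b = p" using sp bE by blast
          then show False using False True ab unfolding H_def by auto
        next
          case aq: False
          show False
          proof (cases "b = q")
            case True
            then have "f a = f p" using eq aq unfolding f'_def by simp
            then have "a = p" using sp aE by blast
            then show False using False True ab unfolding H_def by auto
          next
            case False
            then show False using eq aq fab unfolding f'_def by simp
          qed
        qed
      qed
      then have "inj_on f' B" using ab by auto
      then show ?thesis using B unfolding N_def by (auto simp: bases_T)
    qed
  next
    fix B assume "B \<in> insert H (bases N)"
    then show "B \<in> bases (T E {} f 2)"
    proof
      assume "B = H" then show ?thesis using HE cH pq by (auto simp: bases_T H_def)
    next
      assume "B \<in> bases N"
      then have B: "B \<subseteq> E" "card B = 2" "inj_on f' B" unfolding N_def by (auto simp: bases_T)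
      then obtain a b where ab: "B = {a, b}" "a \<noteq> b" using card2 by blast
      have "f a \<noteq> f b"
      proof
        assume eq: "f a = f b"
        have aE: "a \<in> E" and bE: "b \<in> E" using B ab by auto
        have "a \<noteq> q"
        proof
          assume "a = q" then have "b = q" using sq bE eq by simp
          then show False using ab \<open>a = q\<close> by simp
        qed
        moreover have "b \<noteq> q"
        proof
          assume "b = q" then have "a = q" using sq aE eq by simp
          then show False using ab \<open>b = q\<close> by simp
        qed
        ultimately have "f' a = f' b" using eq unfolding f'_def by simp
        then show False using B(3) ab by auto
      qed
      then show ?thesis using B ab by (auto simp: bases_T)
    qed
  qed
  have HnN: "H \<notin> bases N"
  proof
    assume "H \<in> bases N"
    then have "inj_on f' H" unfolding N_def by (auto simp: bases_T)
    moreover have "f' p = f' q" unfolding f'_def using pnq by simp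
    ultimately show False using pnq unfolding H_def by (auto simp: inj_on_def)
  qed
  have EH: "E - H \<noteq> {}"
  proof
    assume "E - H = {}"
    then have "E \<subseteq> H" by auto
    then have "f ` E \<subseteq> f ` H" by auto
    then have "card (f ` E) \<le> card (f ` H)" by (intro card_mono) (auto simp: H_def)
    moreover have "card (f ` H) \<le> 2" unfolding H_def by (simp add: card_insert_le_m1)
    ultimately show False using m unfolding cl_def by simp
  qed
  have chcN: "chc N H 2"
    unfolding chc_def
  proof (intro conjI ballI)
    show "finite (ground N)" using fin unfolding N_def by simp
    show "bases N \<subseteq> Pow (ground N)" unfolding N_def by (rule T_bases_Pow)
    show "\<And>B. B \<in> bases N \<Longrightarrow> card B = 2" unfolding N_def by (auto simp: bases_T)
    show "H \<subseteq> ground N" using HE unfolding N_def by simp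
    show "card H = 2" by (rule cH)
    show "H \<notin> bases N" by (rule HnN)
    show "H \<noteq> {}" unfolding H_def by simp
    show "ground N - H \<noteq> {}" using EH unfolding N_def by simp
  next
    fix x y assume x: "x \<in> H" and y: "y \<in> ground N - H"
    have yE: "y \<in> E" "y \<noteq> p" "y \<noteq> q" using y unfolding N_def H_def by auto
    have fy: "f' y = f y" "f y \<noteq> f p" using yE sp unfolding f'_def by auto
    obtain z where z: "H - {x} = {z}" "z \<in> H" using x pnq unfolding H_def by auto
    have fz: "f' z = f p" using z unfolding H_def f'_def by auto
    have "insert y (H - {x}) = {y, z}" using z by simp
    moreover have "y \<noteq> z" using yE z unfolding H_def by auto
    moreover have "z \<in> E" using z HE by auto
    ultimately show "insert y (H - {x}) \<in> bases N"
      unfolding N_def bases_T using fy fz yE by auto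
  qed
  have isN: "is_matroid N" unfolding N_def using is_matroid_T[OF fin] m3 by simp
  have binN: "binary N" unfolding N_def using binary_Tm1[OF fin] m3 by simp
  have isT: "is_matroid (T E {} f 2)" using is_matroid_T[OF fin] m by simp
  have relT: "T E {} f 2 = relax N H"
    by (rule matroid_eqI) (simp_all add: bT bases_relax N_def)
  have R1: "in_R (T E {} f 2)" using inR_relax[OF isT isN binN chc_CH[OF chcN] relT] .
  have isdN: "is_matroid (dual N)" unfolding N_def using is_matroid_dual_T[OF fin] m3 by simp
  have bindN: "binary (dual N)" unfolding N_def using binary_dual_Tm1[OF fin] m3 by simp
  have isdT: "is_matroid (dual (T E {} f 2))" using is_matroid_dual_T[OF fin] m by simp
  have reldT: "dual (T E {} f 2) = relax (dual N) (ground N - H)"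
    using relT dual_relax by simp
  have R2: "in_R (dual (T E {} f 2))"
    using inR_relax[OF isdT isdN bindN chc_CH[OF chc_dual[OF chcN]] reldT] .
  show ?thesis using R1 R2 by simp
qed

lemma T_const1:
  assumes fin: "finite E" and r: "1 \<le> cl E L f"
  shows "T E L f 1 = T E L (\<lambda>_. 0) 1" and "cl E L (\<lambda>_. 0) = 1"
proof -
  show "T E L f 1 = T E L (\<lambda>_. 0) 1"
    by (rule matroid_eqI) (auto simp: bases_T card_Suc_eq)
  have "E - L \<noteq> {}" using r unfolding cl_def by (metis card.empty image_empty not_one_le_zero)
  then have "(\<lambda>_. 0::nat) ` (E - L) = {0}" by auto
  then show "cl E L (\<lambda>_. 0) = 1" unfolding cl_def by simp
qed

lemma inR_T:
  assumes fin: "finite E" and r: "r \<le> cl E L f"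
    and cond: "r \<le> 1 \<or> cl E L f \<le> r + 1 \<or>
      (r = 2 \<and> cl E L f = 4 \<and> L = {} \<and> (\<exists>p q. p \<in> E \<and> q \<in> E \<and> f p \<noteq> f q \<and>
         (\<forall>e\<in>E. f e = f p \<longrightarrow> e = p) \<and> (\<forall>e\<in>E. f e = f q \<longrightarrow> e = q)))"
  shows "in_R (T E L f r) \<and> in_R (dual (T E L f r))"
proof -
  have mat: "is_matroid (T E L f r)" "is_matroid (dual (T E L f r))"
    using is_matroid_T[OF fin r] is_matroid_dual_T[OF fin r] .
  consider "r = 0" | "r = 1" | "r = cl E L f" | "r + 1 = cl E L f" |
    "r = 2 \<and> cl E L f = 4 \<and> L = {} \<and> (\<exists>p q. p \<in> E \<and> q \<in> E \<and> f p \<noteq> f q \<and>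
         (\<forall>e\<in>E. f e = f p \<longrightarrow> e = p) \<and> (\<forall>e\<in>E. f e = f q \<longrightarrow> e = q))"
  proof -
    have "r = 0 \<or> r = 1 \<or> r = cl E L f \<or> r + 1 = cl E L f \<or>
      (r = 2 \<and> cl E L f = 4 \<and> L = {} \<and> (\<exists>p q. p \<in> E \<and> q \<in> E \<and> f p \<noteq> f q \<and>
         (\<forall>e\<in>E. f e = f p \<longrightarrow> e = p) \<and> (\<forall>e\<in>E. f e = f q \<longrightarrow> e = q)))"
      using cond r by (elim disjE) auto
    then show thesis using that by blast
  qed
  then show ?thesis
  proof cases
    case 1
    have "binary (T E L f r)" "binary (dual (T E L f r))"
      using binary_T0[OF fin, of L f] binary_dual_T0[OF fin, of L f] 1 by simp_all
    then show ?thesis using mat inR_binary by blast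
  next
    case 2
    have eq: "T E L f r = T E L (\<lambda>_. 0) 1" and c1: "cl E L (\<lambda>_. 0) = 1"
      using T_const1[OF fin, of L f] r 2 by auto
    have "binary (T E L f r)" using binary_Tm[OF fin c1[symmetric]] eq by simp
    moreover have "binary (dual (T E L f r))" using binary_dual_Tm[OF fin c1[symmetric]] eq by simp
    ultimately show ?thesis using mat inR_binary by blast
  next
    case 3
    have "binary (T E L f r)" "binary (dual (T E L f r))"
      using binary_Tm[OF fin 3] binary_dual_Tm[OF fin 3] by simp_all
    then show ?thesis using mat inR_binary by blast
  next
    case 4
    have "binary (T E L f r)" "binary (dual (T E L f r))"
      using binary_Tm1[OF fin 4] binary_dual_Tm1[OF fin 4] by simp_all
    then show ?thesis using mat inR_binary by blast
  next
    case 5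
    then obtain p q where "p \<in> E" "q \<in> E" "f p \<noteq> f q" "\<forall>e\<in>E. f e = f p \<longrightarrow> e = p"
      "\<forall>e\<in>E. f e = f q \<longrightarrow> e = q" by blast
    then have "in_R (T E {} f 2) \<and> in_R (dual (T E {} f 2))" using special[OF fin, of f p q] 5 by blast
    then show ?thesis using 5 by simp
  qed
qed


definition good0 :: "nat set \<Rightarrow> (nat \<Rightarrow> nat) \<Rightarrow> bool" where
  "good0 E0 f \<longleftrightarrow> finite E0 \<and> 2 \<le> cl E0 {} f \<and>
     (\<forall>X \<subseteq> E0. X \<noteq> E0 \<longrightarrow> card (f ` X) \<le> 4) \<and>
     (\<forall>X \<subseteq> E0. X \<noteq> E0 \<longrightarrow> card (f ` X) = 4 \<longrightarrow> (\<exists>p q. p \<in> X \<and> q \<in> X \<and> f p \<noteq> f q \<and>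
         (\<forall>e\<in>X. f e = f p \<longrightarrow> e = p) \<and> (\<forall>e\<in>X. f e = f q \<longrightarrow> e = q)))"

lemma cond_X:
  assumes g: "good0 E0 f" and X: "X \<subseteq> E0" "X \<noteq> E0"
  shows "min 2 (cl X {} f) \<le> 1 \<or> cl X {} f \<le> min 2 (cl X {} f) + 1 \<or>
      (min 2 (cl X {} f) = 2 \<and> cl X {} f = 4 \<and> ({}::nat set) = {} \<and> (\<exists>p q. p \<in> X \<and> q \<in> X \<and> f p \<noteq> f q \<and>
         (\<forall>e\<in>X. f e = f p \<longrightarrow> e = p) \<and> (\<forall>e\<in>X. f e = f q \<longrightarrow> e = q)))"
proof -
  have b: "cl X {} f \<le> 4" using g X unfolding good0_def cl_def by auto
  show ?thesis
  proof (cases "cl X {} f = 4")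
    case True
    then show ?thesis using g X unfolding good0_def cl_def by auto
  next
    case False
    then show ?thesis using b by linarith
  qed
qed

lemma cl_empty[simp]: "cl {} L f = 0" by (simp add: cl_def)

lemma card_img_pos: "finite C \<Longrightarrow> C \<noteq> {} \<Longrightarrow> 1 \<le> card (f ` C)"
  by (simp add: Suc_leI card_gt_0_iff)

lemma minors_M0:
  assumes g: "good0 E0 f" and C: "C \<subseteq> E0" and D: "D \<subseteq> E0" and CD: "C \<inter> D = {}" "C \<union> D \<noteq> {}"
  shows "in_R (delete (contract (T E0 {} f 2) C) D) \<and> in_R (delete (contract (dual (T E0 {} f 2)) C) D)"
proof
  have fin: "finite E0" and m0: "2 \<le> cl E0 {} f" using g unfolding good0_def by auto
  have finC: "finite C" and finD: "finite D" using C D fin finite_subset by blast+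
  let ?L1 = "{} \<union> f -` f ` (C - {})"
  let ?r1 = "2 - cl C {} f"
  have c1: "contract (T E0 {} f 2) C = T (E0 - C) ?L1 f ?r1" using T_contract[OF fin m0 C] .
  have r1: "?r1 \<le> cl (E0 - C) ?L1 f" using T_contract_r[OF fin m0 C] .
  have finEC: "finite (E0 - C)" using fin by simp
  have d1: "delete (T (E0 - C) ?L1 f ?r1) D = T (E0 - C - D) ?L1 f (min ?r1 (cl (E0 - C - D) ?L1 f))"
    using T_delete[OF finEC r1] .
  let ?r2 = "min ?r1 (cl (E0 - C - D) ?L1 f)"
  have finECD: "finite (E0 - C - D)" using fin by simp
  have cond1: "?r2 \<le> 1 \<or> cl (E0 - C - D) ?L1 f \<le> ?r2 + 1 \<or>
      (?r2 = 2 \<and> cl (E0 - C - D) ?L1 f = 4 \<and> ?L1 = {} \<and> (\<exists>p q. p \<in> E0 - C - D \<and> q \<in> E0 - C - D \<and> f p \<noteq> f q \<and>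
         (\<forall>e\<in>E0 - C - D. f e = f p \<longrightarrow> e = p) \<and> (\<forall>e\<in>E0 - C - D. f e = f q \<longrightarrow> e = q)))"
  proof (cases "C = {}")
    case True
    then have "D \<noteq> {}" using CD by simp
    then have X: "E0 - D \<subseteq> E0" "E0 - D \<noteq> E0" using D by auto
    show ?thesis using cond_X[OF g X] True by simp
  next
    case False
    then have "1 \<le> cl C {} f" unfolding cl_def using card_img_pos[OF finC] by simp
    then have "?r2 \<le> 1" by linarith
    then show ?thesis by blast
  qed
  show "in_R (delete (contract (T E0 {} f 2) C) D)"
    unfolding c1 d1 using inR_T[OF finECD _ cond1] by simp
next
  have fin: "finite E0" and m0: "2 \<le> cl E0 {} f" using g unfolding good0_def by auto
  have finC: "finite C" and finD: "finite D" using C D fin finite_subset by blast+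
  have md: "delete (contract (dual (T E0 {} f 2)) C) D = dual (contract (delete (T E0 {} f 2) C) D)"
    using minor_dual[OF T_bases_Pow] .
  let ?r1 = "min 2 (cl (E0 - C) {} f)"
  have d1: "delete (T E0 {} f 2) C = T (E0 - C) {} f ?r1" using T_delete[OF fin m0] .
  have finEC: "finite (E0 - C)" using fin by simp
  have r1: "?r1 \<le> cl (E0 - C) {} f" by simp
  have DC: "D \<subseteq> E0 - C" using D CD by auto
  let ?L2 = "{} \<union> f -` f ` (D - {})"
  let ?r2 = "?r1 - cl D {} f"
  have c1: "contract (T (E0 - C) {} f ?r1) D = T (E0 - C - D) ?L2 f ?r2"
    using T_contract[OF finEC r1 DC] .
  have r2: "?r2 \<le> cl (E0 - C - D) ?L2 f" using T_contract_r[OF finEC r1 DC] .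
  have finECD: "finite (E0 - C - D)" using fin by simp
  have cond1: "?r2 \<le> 1 \<or> cl (E0 - C - D) ?L2 f \<le> ?r2 + 1 \<or>
      (?r2 = 2 \<and> cl (E0 - C - D) ?L2 f = 4 \<and> ?L2 = {} \<and> (\<exists>p q. p \<in> E0 - C - D \<and> q \<in> E0 - C - D \<and> f p \<noteq> f q \<and>
         (\<forall>e\<in>E0 - C - D. f e = f p \<longrightarrow> e = p) \<and> (\<forall>e\<in>E0 - C - D. f e = f q \<longrightarrow> e = q)))"
  proof (cases "D = {}")
    case True
    then have "C \<noteq> {}" using CD by simp
    then have X: "E0 - C \<subseteq> E0" "E0 - C \<noteq> E0" using C by auto
    show ?thesis using cond_X[OF g X] True by simp
  next
    case False
    then have "1 \<le> cl D {} f" unfolding cl_def using card_img_pos[OF finD] by simp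
    then have "?r2 \<le> 1" by linarith
    then show ?thesis by blast
  qed
  have "in_R (dual (T (E0 - C - D) ?L2 f ?r2))" using inR_T[OF finECD r2 cond1] by simp
  then show "in_R (delete (contract (dual (T E0 {} f 2)) C) D)"
    unfolding md d1 c1 .
qed

lemma proper_minor_inR:
  assumes g: "good0 E0 f" and "proper_minor N (T E0 {} f 2)"
  shows "in_R N"
  using assms minors_M0[OF g] unfolding proper_minor_def by auto

lemma proper_minor_dual_inR:
  assumes g: "good0 E0 f" and "proper_minor N (dual (T E0 {} f 2))"
  shows "in_R N"
  using assms minors_M0[OF g] unfolding proper_minor_def by auto


lemma circuit_zero:
  assumes g: "\<And>I. I \<subseteq> ground N \<Longrightarrow> indep N I \<longleftrightarrow> gf2_indep phi I"
    and C: "C \<subseteq> ground N" "\<not> indep N C" "\<forall>x\<in>C. indep N (C - {x})"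
  shows "even (card {e\<in>C. phi e k})"
proof -
  have "\<not> gf2_indep phi C" using g C by auto
  then obtain S where S: "S \<subseteq> C" "S \<noteq> {}" and ev: "\<And>k. even (card {e\<in>S. phi e k})"
    unfolding gf2_indep_def by blast
  have "S = C"
  proof (rule ccontr)
    assume "S \<noteq> C"
    then obtain x where x: "x \<in> C" "x \<notin> S" using S by blast
    have "indep N (C - {x})" using C x by blast
    moreover have "C - {x} \<subseteq> ground N" using C by auto
    ultimately have "gf2_indep phi (C - {x})" using g[of "C - {x}"] by simp
    then obtain k where "odd (card {e\<in>S. phi e k})" using gf2D[of phi "C - {x}" S] S x by auto
    then show False using ev by blast
  qed
  then show ?thesis using ev by simp
qed

lemma parity_symdiff:
  assumes fin: "finite A" "finite B" and ev: "even (card A)" "even (card B)"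
  shows "even (card ((A - B) \<union> (B - A)))"
proof -
  have "card ((A - B) \<union> (B - A)) = card (A - B) + card (B - A)"
    using fin by (intro card_Un_disjoint) auto
  moreover have "card A = card (A - B) + card (A \<inter> B)"
    using fin by (metis card_Un_disjoint Diff_Diff_Int Diff_disjoint Int_Diff_disjoint Un_Diff_Int finite_Diff finite_Int inf_commute)
  moreover have "card B = card (B - A) + card (A \<inter> B)"
    using fin by (metis card_Un_disjoint Diff_Diff_Int Diff_disjoint Int_Diff_disjoint Un_Diff_Int finite_Diff finite_Int inf_commute)
  ultimately show ?thesis using ev by presburger
qed

lemma circ_delta:
  assumes bin: "binary N" and fin: "finite (ground N)"
    and C1: "C1 \<subseteq> ground N" "\<not> indep N C1" "\<forall>x\<in>C1. indep N (C1 - {x})"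
    and C2: "C2 \<subseteq> ground N" "\<not> indep N C2" "\<forall>x\<in>C2. indep N (C2 - {x})"
    and D: "indep N ((C1 - C2) \<union> (C2 - C1))" "(C1 - C2) \<union> (C2 - C1) \<noteq> {}"
  shows False
proof -
  obtain phi where g: "\<And>I. I \<subseteq> ground N \<Longrightarrow> indep N I \<longleftrightarrow> gf2_indep phi I"
    using bin unfolding binary_def by blast
  let ?D = "(C1 - C2) \<union> (C2 - C1)"
  have "?D \<subseteq> ground N" using C1 C2 by auto
  then have "gf2_indep phi ?D" using g[of ?D] D by simp
  then obtain k where k: "odd (card {e\<in>?D. phi e k})" using gf2D[of phi ?D ?D] D by auto
  have "finite C1" "finite C2" using finite_subset[OF C1(1) fin] finite_subset[OF C2(1) fin] .
  then have f1: "finite {e\<in>C1. phi e k}" "finite {e\<in>C2. phi e k}" by auto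
  have "even (card (({e\<in>C1. phi e k} - {e\<in>C2. phi e k}) \<union> ({e\<in>C2. phi e k} - {e\<in>C1. phi e k})))"
    using parity_symdiff[OF f1 circuit_zero[OF g C1] circuit_zero[OF g C2]] .
  moreover have "({e\<in>C1. phi e k} - {e\<in>C2. phi e k}) \<union> ({e\<in>C2. phi e k} - {e\<in>C1. phi e k}) = {e\<in>?D. phi e k}"
    by auto
  ultimately show False using k by simp
qed

lemma relax_info:
  assumes "circuit_hyperplane N H" "M = relax N H"
  shows "ground N = ground M" "bases N = bases M - {H}" "H \<in> bases M"
proof -
  have "\<not> indep N H" using assms(1) unfolding circuit_hyperplane_def circuit_def by auto
  then have "H \<notin> bases N" unfolding indep_def by auto
  then show "ground N = ground M" "bases N = bases M - {H}" "H \<in> bases M"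
    using assms(2) by (auto simp: bases_relax)
qed

lemma T2_refute:
  assumes fin: "finite E" and m: "2 \<le> cl E {} f" and bin: "binary N" and gN: "ground N = E"
    and sub: "\<And>X. indep N X \<Longrightarrow> indep (T E {} f 2) X"
    and ts: "t0 \<in> E" "t1 \<in> E" "t2 \<in> E" "t3 \<in> E"
    and fs: "f t0 \<noteq> f t1" "f t0 \<noteq> f t2" "f t0 \<noteq> f t3" "f t1 \<noteq> f t2" "f t1 \<noteq> f t3" "f t2 \<noteq> f t3"
    and pairs: "\<And>a b. a \<in> {t0, t1, t2, t3} \<Longrightarrow> b \<in> {t0, t1, t2, t3} \<Longrightarrow> a \<noteq> b \<Longrightarrow> indep N {a, b}"
  shows False
proof -
  have d: "t0 \<noteq> t1" "t0 \<noteq> t2" "t0 \<noteq> t3" "t1 \<noteq> t2" "t1 \<noteq> t3" "t2 \<noteq> t3" using fs by auto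
  have ind: "\<And>X. indep (T E {} f 2) X \<longleftrightarrow> X \<subseteq> E - {} \<and> inj_on f X \<and> card X \<le> 2"
    using T_indep[OF fin m] .
  have dep3: "\<not> indep N {a, b, c}" if "a \<noteq> b" "a \<noteq> c" "b \<noteq> c" for a b c
  proof
    assume "indep N {a, b, c}"
    then have "card {a, b, c} \<le> 2" using sub ind by blast
    then show False using that by simp
  qed
  show False
  proof (rule circ_delta[OF bin, of "{t0, t1, t2}" "{t0, t1, t3}"])
    show "finite (ground N)" using fin gN by simp
    show "{t0, t1, t2} \<subseteq> ground N" "{t0, t1, t3} \<subseteq> ground N" using ts gN by auto
    show "\<not> indep N {t0, t1, t2}" "\<not> indep N {t0, t1, t3}" using dep3 d by auto
    show "\<forall>x\<in>{t0, t1, t2}. indep N ({t0, t1, t2} - {x})"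
    proof
      fix x assume "x \<in> {t0, t1, t2}"
      then consider "x = t0" | "x = t1" | "x = t2" by blast
      then show "indep N ({t0, t1, t2} - {x})"
      proof cases
        case 1 then have "{t0, t1, t2} - {x} = {t1, t2}" using d by auto
        then show ?thesis using pairs[of t1 t2] d by simp
      next
        case 2 then have "{t0, t1, t2} - {x} = {t0, t2}" using d by auto
        then show ?thesis using pairs[of t0 t2] d by simp
      next
        case 3 then have "{t0, t1, t2} - {x} = {t0, t1}" using d by auto
        then show ?thesis using pairs[of t0 t1] d by simp
      qed
    qed
    show "\<forall>x\<in>{t0, t1, t3}. indep N ({t0, t1, t3} - {x})"
    proof
      fix x assume "x \<in> {t0, t1, t3}"
      then consider "x = t0" | "x = t1" | "x = t3" by blast
      then show "indep N ({t0, t1, t3} - {x})"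
      proof cases
        case 1 then have "{t0, t1, t3} - {x} = {t1, t3}" using d by auto
        then show ?thesis using pairs[of t1 t3] d by simp
      next
        case 2 then have "{t0, t1, t3} - {x} = {t0, t3}" using d by auto
        then show ?thesis using pairs[of t0 t3] d by simp
      next
        case 3 then have "{t0, t1, t3} - {x} = {t0, t1}" using d by auto
        then show ?thesis using pairs[of t0 t1] d by simp
      qed
    qed
    have "({t0, t1, t2} - {t0, t1, t3}) \<union> ({t0, t1, t3} - {t0, t1, t2}) = {t2, t3}" using d by auto
    then show "indep N (({t0, t1, t2} - {t0, t1, t3}) \<union> ({t0, t1, t3} - {t0, t1, t2}))"
      "({t0, t1, t2} - {t0, t1, t3}) \<union> ({t0, t1, t3} - {t0, t1, t2}) \<noteq> {}"
      using pairs[of t2 t3] d by auto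
  qed
qed

definition tsok :: "nat set \<Rightarrow> (nat \<Rightarrow> nat) \<Rightarrow> nat \<Rightarrow> nat \<Rightarrow> nat \<Rightarrow> nat \<Rightarrow> bool" where
  "tsok W f t0 t1 t2 t3 \<longleftrightarrow> t0 \<in> W \<and> t1 \<in> W \<and> t2 \<in> W \<and> t3 \<in> W \<and>
     f t0 \<noteq> f t1 \<and> f t0 \<noteq> f t2 \<and> f t0 \<noteq> f t3 \<and> f t1 \<noteq> f t2 \<and> f t1 \<noteq> f t3 \<and> f t2 \<noteq> f t3"

lemma notR_T2:
  assumes fin: "finite E" and m: "2 \<le> cl E {} f"
    and tb: "\<exists>t0 t1 t2 t3. tsok E f t0 t1 t2 t3"
    and tr: "\<And>H. H \<in> bases (T E {} f 2) \<Longrightarrow> \<exists>d\<in>H. \<exists>t0 t1 t2 t3. tsok (E - {d}) f t0 t1 t2 t3"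
  shows "\<not> in_R (T E {} f 2)"
proof
  let ?M = "T E {} f 2"
  have ind: "\<And>X. indep ?M X \<longleftrightarrow> X \<subseteq> E - {} \<and> inj_on f X \<and> card X \<le> 2"
    using T_indep[OF fin m] .
  have pairM: "{a, b} \<in> bases ?M" if "a \<in> E" "b \<in> E" "f a \<noteq> f b" for a b
  proof -
    have "a \<noteq> b" using that by auto
    then show ?thesis using that by (auto simp: bases_T)
  qed
  assume "in_R ?M"
  then consider "binary ?M" | N H where "is_matroid N" "binary N" "circuit_hyperplane N H" "?M = relax N H"
    unfolding in_R_def by blast
  then show False
  proof cases
    case 1
    obtain t0 t1 t2 t3 where t: "tsok E f t0 t1 t2 t3" using tb by blast
    show False
    proof (rule T2_refute[OF fin m 1, of t0 t1 t2 t3])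
      fix a b assume ab: "a \<in> {t0, t1, t2, t3}" "b \<in> {t0, t1, t2, t3}" "a \<noteq> b"
      then have "a \<in> E" "b \<in> E" "f a \<noteq> f b" using t unfolding tsok_def by auto
      then show "indep ?M {a, b}" using pairM unfolding indep_def by blast
    qed (use t in \<open>auto simp: tsok_def\<close>)
  next
    case 2
    note ri = relax_info[OF 2(3,4)]
    obtain d t0 t1 t2 t3 where d: "d \<in> H" and t: "tsok (E - {d}) f t0 t1 t2 t3" using tr[OF ri(3)] by blast
    show False
    proof (rule T2_refute[OF fin m 2(2), of t0 t1 t2 t3])
      show "ground N = E" using ri by simp
      fix X assume "indep N X"
      then obtain B where "B \<in> bases N" "X \<subseteq> B" unfolding indep_def by blast
      then show "indep ?M X" using ri(2) unfolding indep_def by blast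
    next
      fix a b assume ab: "a \<in> {t0, t1, t2, t3}" "b \<in> {t0, t1, t2, t3}" "a \<noteq> b"
      have tE: "{t0, t1, t2, t3} \<subseteq> E - {d}" using t unfolding tsok_def by blast
      have "f a \<noteq> f b" using t ab unfolding tsok_def by auto
      moreover have "a \<in> E" "b \<in> E" "a \<noteq> d" "b \<noteq> d" using ab tE by auto
      ultimately have "{a, b} \<in> bases ?M" "{a, b} \<noteq> H" using pairM[of a b] d by auto
      then have "{a, b} \<in> bases N" using ri(2) by blast
      then show "indep N {a, b}" unfolding indep_def by blast
    qed (use t in \<open>auto simp: tsok_def\<close>)
  qed
qed


abbreviation "E5 \<equiv> {0..<5::nat}"
abbreviation "E7 \<equiv> {0..<7::nat}"

lemma U25_eq: "uniform 2 5 = T E5 {} id 2"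
  by (simp add: uniform_def T_def)

lemma U35_T: "uniform 3 5 = T E5 {} id 3"
  by (simp add: uniform_def T_def)

lemma U35_eq: "uniform 3 5 = dual (T E5 {} id 2)"
proof (rule matroid_eqI)
  show "ground (uniform 3 5) = ground (dual (T E5 {} id 2))" by (simp add: uniform_def ground_def[of "(_, _)"])
  show "bases (uniform 3 5) = bases (dual (T E5 {} id 2))"
  proof (intro set_eqI iffI)
    fix B assume "B \<in> bases (uniform 3 5)"
    then have B: "B \<subseteq> E5" "card B = 3" by (auto simp: uniform_def bases_def)
    have "card (E5 - B) = 2" using B finite_subset[OF B(1)] by (simp add: card_Diff_subset)
    moreover have "B = E5 - (E5 - B)" using B by auto
    ultimately show "B \<in> bases (dual (T E5 {} id 2))"
      unfolding bases_dual bases_T by (auto intro!: image_eqI[of _ _ "E5 - B"])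
  next
    fix B assume "B \<in> bases (dual (T E5 {} id 2))"
    then obtain B0 where "B0 \<subseteq> E5" "card B0 = 2" "B = E5 - B0" unfolding bases_dual bases_T by auto
    then show "B \<in> bases (uniform 3 5)"
      using finite_subset[of B0 E5] by (simp add: uniform_def bases_def card_Diff_subset)
  qed
qed

lemma K_eq: "K = T E7 {} Kcls 2"
proof (rule matroid_eqI)
  show "ground K = ground (T E7 {} Kcls 2)" by (simp add: K_def ground_def[of "(_, _)"])
  show "bases K = bases (T E7 {} Kcls 2)"
  proof (intro set_eqI iffI)
    fix B assume "B \<in> bases K"
    then obtain a b where ab: "B = {a, b}" "a \<in> E7" "b \<in> E7" "Kcls a \<noteq> Kcls b"
      by (auto simp: K_def bases_def)
    then have "a \<noteq> b" by auto
    then show "B \<in> bases (T E7 {} Kcls 2)" using ab by (auto simp: bases_T)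
  next
    fix B assume "B \<in> bases (T E7 {} Kcls 2)"
    then have B: "B \<subseteq> E7" "card B = 2" "inj_on Kcls B" by (auto simp: bases_T)
    then obtain a b where ab: "B = {a, b}" "a \<noteq> b" by (metis card_2_iff)
    then have "Kcls a \<noteq> Kcls b" using B(3) by (auto simp: inj_on_def)
    then show "B \<in> bases K" using ab B by (auto simp: K_def bases_def)
  qed
qed

lemma Kstar_eq: "Kstar = dual (T E7 {} Kcls 2)"
  by (simp add: Kstar_def K_eq)

lemma Kcls_mod: "x < 7 \<Longrightarrow> Kcls x = x mod 4"
proof -
  assume "x < 7"
  then have "x = 0 \<or> x = 1 \<or> x = 2 \<or> x = 3 \<or> x = 4 \<or> x = 5 \<or> x = 6" by linarith
  then show ?thesis by (elim disjE) (simp_all add: Kcls_def)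
qed

lemma Kcls_lt: "x < 7 \<Longrightarrow> Kcls x < 4"
  using Kcls_mod by simp

lemma Kcls_img: "Kcls ` E7 = {0..<4}"
proof (intro set_eqI iffI)
  fix c assume "c \<in> Kcls ` E7" then show "c \<in> {0..<4}" using Kcls_lt by auto
next
  fix c :: nat assume c: "c \<in> {0..<4}"
  then have "Kcls c = c" unfolding Kcls_def by auto
  then show "c \<in> Kcls ` E7" using c by (auto intro!: image_eqI[of _ _ c])
qed

lemma good_U: "good0 E5 id"
  unfolding good0_def
proof (intro conjI allI impI)
  show "finite E5" by simp
  show "2 \<le> cl E5 {} id" by (simp add: cl_def)
  fix X assume X: "X \<subseteq> E5" "X \<noteq> E5"
  then have "X \<subset> E5" by auto
  then have cX: "card X < 5" using psubset_card_mono[of E5 X] by simp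
  then show "card (id ` X) \<le> 4" by simp
  assume "card (id ` X) = 4"
  then have "card X = 4" by simp
  then obtain S where S: "S \<subseteq> X" "card S = 2" using obtain_subset_with_card_n[of 2 X] by auto
  then obtain p q where "S = {p, q}" "p \<noteq> q" by (meson card_2_iff)
  then have "p \<in> X" "q \<in> X" "p \<noteq> q" using S by auto
  then show "\<exists>p q. p \<in> X \<and> q \<in> X \<and> id p \<noteq> id q \<and> (\<forall>e\<in>X. id e = id p \<longrightarrow> e = p) \<and>
       (\<forall>e\<in>X. id e = id q \<longrightarrow> e = q)" by auto
qed

lemma mod4_cases: "a < 7 \<Longrightarrow> b < 7 \<Longrightarrow> a mod 4 = (b::nat) mod 4 \<Longrightarrow> a = b \<or> a = b + 4 \<or> b = a + 4"
  by presburger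

lemma Kcls_three: "a < 7 \<Longrightarrow> b < 7 \<Longrightarrow> c < 7 \<Longrightarrow> Kcls a = Kcls b \<Longrightarrow> Kcls a = Kcls c \<Longrightarrow>
  a = b \<or> a = c \<or> b = c"
proof -
  assume h: "a < 7" "b < 7" "c < 7" "Kcls a = Kcls b" "Kcls a = Kcls c"
  then have "a mod 4 = b mod 4" "a mod 4 = c mod 4" using Kcls_mod by auto
  then have "a = b \<or> a = b + 4 \<or> b = a + 4" "a = c \<or> a = c + 4 \<or> c = a + 4"
    using mod4_cases h by blast+
  then show ?thesis using h by linarith
qed

lemma Kcls_3: "a < 7 \<Longrightarrow> Kcls a = 3 \<longleftrightarrow> a = 3"
proof -
  assume "a < 7"
  then have "a = 0 \<or> a = 1 \<or> a = 2 \<or> a = 3 \<or> a = 4 \<or> a = 5 \<or> a = 6" by linarith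
  then show ?thesis by (elim disjE) (simp_all add: Kcls_def)
qed

lemma good_K: "good0 E7 Kcls"
  unfolding good0_def
proof (intro conjI allI impI)
  show "finite E7" by simp
  show "2 \<le> cl E7 {} Kcls" by (simp add: cl_def Kcls_img)
  fix X assume X: "X \<subseteq> E7" "X \<noteq> E7"
  have sub: "Kcls ` X \<subseteq> {0..<4}" using X Kcls_lt by auto
  then show "card (Kcls ` X) \<le> 4" using card_mono[of "{0..<4::nat}"] by fastforce
  assume c4: "card (Kcls ` X) = 4"
  then have eq: "Kcls ` X = {0..<4}" using sub by (intro card_subset_eq) auto
  then have "3 \<in> Kcls ` X" by simp
  then have X3: "3 \<in> X" using X Kcls_3 by auto
  obtain c where c: "c \<in> E7" "c \<notin> X" using X by blast
  then have "Kcls c \<in> Kcls ` X" using eq Kcls_lt by auto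
  then obtain c' where c': "c' \<in> X" "Kcls c' = Kcls c" by (metis imageE)
  have cc: "c \<noteq> c'" using c c' by auto
  have c3: "c \<noteq> 3" using c X3 by auto
  have fq: "Kcls 3 \<noteq> Kcls c'" using c' c c3 Kcls_3[of c] by (simp add: Kcls_def)
  show "\<exists>p q. p \<in> X \<and> q \<in> X \<and> Kcls p \<noteq> Kcls q \<and> (\<forall>e\<in>X. Kcls e = Kcls p \<longrightarrow> e = p) \<and>
       (\<forall>e\<in>X. Kcls e = Kcls q \<longrightarrow> e = q)"
  proof (rule exI[of _ "3::nat"], rule exI[of _ c'], intro conjI ballI impI)
    show "3 \<in> X" "c' \<in> X" "Kcls 3 \<noteq> Kcls c'" using X3 c' fq by auto
  next
    fix e assume "e \<in> X" "Kcls e = Kcls 3"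
    then show "e = 3" using X Kcls_3[of e] by (auto simp: Kcls_def)
  next
    fix e assume e: "e \<in> X" "Kcls e = Kcls c'"
    have "e < 7" "c < 7" "c' < 7" using e c c' X by auto
    then have "e = c \<or> e = c' \<or> c = c'" using Kcls_three[of e c c'] e c' by simp
    then show "e = c'" using e c cc by auto
  qed
qed


lemma ts_U: "d < 5 \<Longrightarrow> \<exists>t0 t1 t2 t3. tsok (E5 - {d}) id t0 t1 t2 t3"
proof -
  assume "d < 5"
  then have "d = 0 \<or> d = 1 \<or> d = 2 \<or> d = 3 \<or> d = 4" by linarith
  then show ?thesis
  proof (elim disjE)
    assume d0: "d = 0" show ?thesis unfolding d0
      by (rule exI[of _ "1::nat"], rule exI[of _ "2::nat"], rule exI[of _ "3::nat"], rule exI[of _ "4::nat"]) (simp add: tsok_def)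
  next
    assume d1: "d = 1" show ?thesis unfolding d1
      by (rule exI[of _ "0::nat"], rule exI[of _ "2::nat"], rule exI[of _ "3::nat"], rule exI[of _ "4::nat"]) (simp add: tsok_def)
  next
    assume d2: "d = 2" show ?thesis unfolding d2
      by (rule exI[of _ "0::nat"], rule exI[of _ "1::nat"], rule exI[of _ "3::nat"], rule exI[of _ "4::nat"]) (simp add: tsok_def)
  next
    assume d3: "d = 3" show ?thesis unfolding d3
      by (rule exI[of _ "0::nat"], rule exI[of _ "1::nat"], rule exI[of _ "2::nat"], rule exI[of _ "4::nat"]) (simp add: tsok_def)
  next
    assume d4: "d = 4" show ?thesis unfolding d4
      by (rule exI[of _ "0::nat"], rule exI[of _ "1::nat"], rule exI[of _ "2::nat"], rule exI[of _ "3::nat"]) (simp add: tsok_def)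
  qed
qed

lemma ts_K: "d < 7 \<Longrightarrow> d \<noteq> 3 \<Longrightarrow> \<exists>t0 t1 t2 t3. tsok (E7 - {d}) Kcls t0 t1 t2 t3"
proof -
  assume "d < 7" "d \<noteq> 3"
  then have "d = 0 \<or> d = 1 \<or> d = 2 \<or> d = 4 \<or> d = 5 \<or> d = 6" by linarith
  then show ?thesis
  proof (elim disjE)
    assume d0: "d = 0" show ?thesis unfolding d0
      by (rule exI[of _ "4::nat"], rule exI[of _ "1::nat"], rule exI[of _ "2::nat"], rule exI[of _ "3::nat"]) (simp add: tsok_def Kcls_def)
  next
    assume d1: "d = 1" show ?thesis unfolding d1
      by (rule exI[of _ "0::nat"], rule exI[of _ "5::nat"], rule exI[of _ "2::nat"], rule exI[of _ "3::nat"]) (simp add: tsok_def Kcls_def)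
  next
    assume d2: "d = 2" show ?thesis unfolding d2
      by (rule exI[of _ "0::nat"], rule exI[of _ "1::nat"], rule exI[of _ "6::nat"], rule exI[of _ "3::nat"]) (simp add: tsok_def Kcls_def)
  next
    assume d4: "d = 4" show ?thesis unfolding d4
      by (rule exI[of _ "0::nat"], rule exI[of _ "1::nat"], rule exI[of _ "2::nat"], rule exI[of _ "3::nat"]) (simp add: tsok_def Kcls_def)
  next
    assume d5: "d = 5" show ?thesis unfolding d5
      by (rule exI[of _ "0::nat"], rule exI[of _ "1::nat"], rule exI[of _ "2::nat"], rule exI[of _ "3::nat"]) (simp add: tsok_def Kcls_def)
  next
    assume d6: "d = 6" show ?thesis unfolding d6
      by (rule exI[of _ "0::nat"], rule exI[of _ "1::nat"], rule exI[of _ "2::nat"], rule exI[of _ "3::nat"]) (simp add: tsok_def Kcls_def)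
  qed
qed

lemma notR_U25: "\<not> in_R (T E5 {} id 2)"
proof (rule notR_T2)
  show "finite E5" by simp
  show "2 \<le> cl E5 {} id" by (simp add: cl_def)
  show "\<exists>t0 t1 t2 t3. tsok E5 id t0 t1 t2 t3"
    by (rule exI[of _ "0::nat"], rule exI[of _ "1::nat"], rule exI[of _ "2::nat"], rule exI[of _ "3::nat"]) (simp add: tsok_def)
  fix H assume "H \<in> bases (T E5 {} id 2)"
  then have H: "H \<subseteq> E5" "card H = 2" by (auto simp: bases_T)
  then obtain d where d: "d \<in> H" by fastforce
  then have "d < 5" using H by auto
  then show "\<exists>d\<in>H. \<exists>t0 t1 t2 t3. tsok (E5 - {d}) id t0 t1 t2 t3" using ts_U d by blast
qed

lemma notR_K: "\<not> in_R (T E7 {} Kcls 2)"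
proof (rule notR_T2)
  show "finite E7" by simp
  show "2 \<le> cl E7 {} Kcls" by (simp add: cl_def Kcls_img)
  show "\<exists>t0 t1 t2 t3. tsok E7 Kcls t0 t1 t2 t3"
    by (rule exI[of _ "0::nat"], rule exI[of _ "1::nat"], rule exI[of _ "2::nat"], rule exI[of _ "3::nat"]) (simp add: tsok_def Kcls_def)
  fix H assume "H \<in> bases (T E7 {} Kcls 2)"
  then have H: "H \<subseteq> E7" "card H = 2" by (auto simp: bases_T)
  then obtain a b where ab: "H = {a, b}" "a \<noteq> b" by (meson card_2_iff)
  define d where "d = (if a = 3 then b else a)"
  have d: "d \<in> H" "d \<noteq> 3" "d < 7" using ab H unfolding d_def by auto
  then show "\<exists>d\<in>H. \<exists>t0 t1 t2 t3. tsok (E7 - {d}) Kcls t0 t1 t2 t3" using ts_K by blast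
qed

lemma indep_relaxN:
  assumes "bases N = bases M - {H}" "B \<in> bases M" "B \<noteq> H" "X \<subseteq> B"
  shows "indep N X"
  using assms unfolding indep_def by blast

lemma dep_relaxN:
  assumes "bases N = bases M - {H}" "\<not> indep M X"
  shows "\<not> indep N X"
  using assms unfolding indep_def by blast

lemma notR_U35: "\<not> in_R (T E5 {} id 3)"
proof
  let ?M = "T E5 {} id 3"
  have ind: "\<And>X. indep ?M X \<longleftrightarrow> X \<subseteq> E5 \<and> card X \<le> 3"
    using T_indep[of E5 3 "{}" id] by (simp add: cl_def)
  have bM: "\<And>B. B \<in> bases ?M \<longleftrightarrow> B \<subseteq> E5 \<and> card B = 3" by (simp add: bases_T)
  assume "in_R ?M"
  then consider "binary ?M" | N H where "is_matroid N" "binary N" "circuit_hyperplane N H" "?M = relax N H"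
    unfolding in_R_def by blast
  then show False
  proof cases
    case 1
    show False
    proof (rule circ_delta[OF 1, of "{0,1,2,3}" "{0,1,2,4}"])
      show "finite (ground ?M)" by simp
      show "{0,1,2,3} \<subseteq> ground ?M" "{0,1,2,4} \<subseteq> ground ?M" by auto
      show "\<not> indep ?M {0,1,2,3}" "\<not> indep ?M {0,1,2,4}" unfolding ind by auto
      show "\<forall>x\<in>{0,1,2,3}. indep ?M ({0,1,2,3} - {x})" unfolding ind by (auto simp: card_Diff_singleton)
      show "\<forall>x\<in>{0,1,2,4}. indep ?M ({0,1,2,4} - {x})" unfolding ind by (auto simp: card_Diff_singleton)
      have "({0,1,2,3} - {0,1,2,4}) \<union> ({0,1,2,4} - {0,1,2,3}) = {3,4::nat}" by auto
      then show "indep ?M (({0,1,2,3} - {0,1,2,4}) \<union> ({0,1,2,4} - {0,1,2,3}))"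
        "({0,1,2,3} - {0,1,2,4}) \<union> ({0,1,2,4} - {0,1,2,3::nat}) \<noteq> {}" unfolding ind by auto
    qed
  next
    case 2
    note ri = relax_info[OF 2(3,4)]
    have HB: "H \<subseteq> E5" "card H = 3" using bM[of H] ri(3) by simp_all
    have finH: "finite H" using finite_subset[OF HB(1)] by simp
    obtain a b c where abc: "H = {a, b, c}" "a \<noteq> b" using HB(2) card_3_iff[of H] by blast
    have ab: "a \<noteq> b" by (rule abc(2))
    have abH: "a \<in> H" "b \<in> H" using abc(1) by auto
    have "card (E5 - H) = 2" using HB finH by (simp add: card_Diff_subset)
    then have "E5 - H \<noteq> {}" by (metis card.empty zero_neq_numeral)
    then obtain y where y: "y \<in> E5" "y \<notin> H" by blast
    have aE: "a \<in> E5" "b \<in> E5" using abH HB by auto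
    have c4: "card (E5 - {a}) = 4" "card (E5 - {b}) = 4" using aE by (simp_all add: card_Diff_singleton)
    have sd: "((E5 - {a}) - (E5 - {b})) \<union> ((E5 - {b}) - (E5 - {a})) = {a, b}" using aE ab by auto
    have gN: "ground N = E5" using ri by simp
    show False
    proof (rule circ_delta[OF 2(2), of "E5 - {a}" "E5 - {b}"])
      show "finite (ground N)" using gN by simp
      show "E5 - {a} \<subseteq> ground N" "E5 - {b} \<subseteq> ground N" using gN by auto
      have "\<not> indep ?M (E5 - {a})" "\<not> indep ?M (E5 - {b})" unfolding ind using c4 by simp_all
      then show "\<not> indep N (E5 - {a})" "\<not> indep N (E5 - {b})"
        using dep_relaxN[OF ri(2)] by blast+
      show "\<forall>x\<in>E5 - {a}. indep N (E5 - {a} - {x})"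
      proof
        fix x assume x: "x \<in> E5 - {a}"
        have "card (E5 - {a} - {x}) = 3" using x c4 by (simp add: card_Diff_singleton)
        then have "E5 - {a} - {x} \<in> bases ?M" unfolding bM by auto
        moreover have "E5 - {a} - {x} \<noteq> H" using abH by blast
        ultimately show "indep N (E5 - {a} - {x})" by (rule indep_relaxN[OF ri(2) _ _ subset_refl])
      qed
      show "\<forall>x\<in>E5 - {b}. indep N (E5 - {b} - {x})"
      proof
        fix x assume x: "x \<in> E5 - {b}"
        have "card (E5 - {b} - {x}) = 3" using x c4 by (simp add: card_Diff_singleton)
        then have "E5 - {b} - {x} \<in> bases ?M" unfolding bM by auto
        moreover have "E5 - {b} - {x} \<noteq> H" using abH by blast
        ultimately show "indep N (E5 - {b} - {x})" by (rule indep_relaxN[OF ri(2) _ _ subset_refl])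
      qed
      have "y \<noteq> a" "y \<noteq> b" using y abH by auto
      then have "{a, b, y} \<in> bases ?M" unfolding bM using aE y ab by auto
      moreover have "{a, b, y} \<noteq> H" using y by auto
      moreover have "{a, b} \<subseteq> {a, b, y}" by blast
      ultimately show "indep N (((E5 - {a}) - (E5 - {b})) \<union> ((E5 - {b}) - (E5 - {a})))"
        unfolding sd by (rule indep_relaxN[OF ri(2)])
      show "((E5 - {a}) - (E5 - {b})) \<union> ((E5 - {b}) - (E5 - {a})) \<noteq> {}" unfolding sd by simp
    qed
  qed
qed


abbreviation "KS \<equiv> dual (T E7 {} Kcls 2)"

lemma KS_indep: "indep KS X \<longleftrightarrow> X \<subseteq> E7 \<and> 2 \<le> card (Kcls ` (E7 - X))"
  using T_dual_indep[of E7 2 "{}" Kcls X] by (simp add: cl_def Kcls_img)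

lemma card2_img: "a \<in> X \<Longrightarrow> b \<in> X \<Longrightarrow> f a \<noteq> f b \<Longrightarrow> finite X \<Longrightarrow> 2 \<le> card (f ` X)"
proof -
  assume h: "a \<in> X" "b \<in> X" "f a \<noteq> f b" "finite X"
  have "{f a, f b} \<subseteq> f ` X" using h by auto
  then have "card {f a, f b} \<le> card (f ` X)" using h by (intro card_mono) auto
  then show ?thesis using h by simp
qed

lemma Kb: "a < 7 \<Longrightarrow> b < 7 \<Longrightarrow> Kcls a \<noteq> Kcls b \<Longrightarrow> E7 - {a, b} \<in> bases KS"
proof -
  assume h: "a < 7" "b < 7" "Kcls a \<noteq> Kcls b"
  then have "a \<noteq> b" by auto
  then have "{a, b} \<in> bases (T E7 {} Kcls 2)" using h by (auto simp: bases_T)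
  then show ?thesis unfolding bases_dual by auto
qed

lemma two_bases:
  assumes "bases N = bases M - {H}" "B1 \<in> bases M" "B2 \<in> bases M" "B1 \<noteq> B2" "X \<subseteq> B1" "X \<subseteq> B2"
  shows "indep N X"
proof (cases "B1 = H")
  case True
  then have "B2 \<in> bases N" using assms by auto
  then show ?thesis using assms(6) unfolding indep_def by blast
next
  case False
  then have "B1 \<in> bases N" using assms by auto
  then show ?thesis using assms(5) unfolding indep_def by blast
qed

lemma KS_circ:
  assumes c: "c < 7" "c' < 7" "c \<noteq> c'" "Kcls c = Kcls c'" and oth: "\<forall>x\<in>E7 - {c, c'}. Kcls x \<noteq> Kcls c"
  shows "\<not> indep KS (E7 - {c, c'}) \<and>
    (\<forall>x\<in>E7 - {c, c'}. indep KS (E7 - {c, c'} - {x})) \<and>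
    (\<forall>x\<in>E7 - {c, c'}. E7 - {c, x} \<in> bases KS \<and> E7 - {c', x} \<in> bases KS \<and>
           E7 - {c, x} \<noteq> E7 - {c', x} \<and> E7 - {c, c'} - {x} \<subseteq> E7 - {c, x} \<and> E7 - {c, c'} - {x} \<subseteq> E7 - {c', x})"
proof (intro conjI ballI)
  have e1: "E7 - (E7 - {c, c'}) = {c, c'}" using c by auto
  show "\<not> indep KS (E7 - {c, c'})" unfolding KS_indep e1 using c by simp
next
  fix x assume x: "x \<in> E7 - {c, c'}"
  have e2: "E7 - (E7 - {c, c'} - {x}) = {x, c, c'}" using c x by auto
  have "Kcls x \<noteq> Kcls c" using oth x by blast
  then have "2 \<le> card (Kcls ` {x, c, c'})" using card2_img[of x "{x, c, c'}" c Kcls] by simp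
  then show "indep KS (E7 - {c, c'} - {x})" unfolding KS_indep e2 by auto
next
  fix x assume x: "x \<in> E7 - {c, c'}"
  have xx: "x < 7" "Kcls x \<noteq> Kcls c" using x oth by auto
  show "E7 - {c, x} \<in> bases KS" using Kb[of c x] c xx by auto
  show "E7 - {c', x} \<in> bases KS" using Kb[of c' x] c xx by auto
  have "c' \<in> E7 - {c, x}" using c x by auto
  moreover have "c' \<notin> E7 - {c', x}" by simp
  ultimately show "E7 - {c, x} \<noteq> E7 - {c', x}" by blast
  show "E7 - {c, c'} - {x} \<subseteq> E7 - {c, x}" "E7 - {c, c'} - {x} \<subseteq> E7 - {c', x}" by auto
qed

lemma notR_KS: "\<not> in_R KS"
proof
  have o04: "\<forall>x\<in>E7 - {0, 4}. Kcls x \<noteq> Kcls 0"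
  proof
    fix x :: nat assume "x \<in> E7 - {0, 4}"
    then have "x < 7" "x \<noteq> 0" "x \<noteq> 4" by auto
    then have "x mod 4 \<noteq> 0" by presburger
    then show "Kcls x \<noteq> Kcls 0" using Kcls_mod \<open>x < 7\<close> by (simp add: Kcls_def)
  qed
  have o15: "\<forall>x\<in>E7 - {1, 5}. Kcls x \<noteq> Kcls 1"
  proof
    fix x :: nat assume "x \<in> E7 - {1, 5}"
    then have "x < 7" "x \<noteq> 1" "x \<noteq> 5" by auto
    then have "x mod 4 \<noteq> 1" by presburger
    then show "Kcls x \<noteq> Kcls 1" using Kcls_mod \<open>x < 7\<close> by (simp add: Kcls_def)
  qed
  have k04: "(0::nat) < 7" "(4::nat) < 7" "(0::nat) \<noteq> 4" "Kcls 0 = Kcls 4" by (simp_all add: Kcls_def)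
  have k15: "(1::nat) < 7" "(5::nat) < 7" "(1::nat) \<noteq> 5" "Kcls 1 = Kcls 5" by (simp_all add: Kcls_def)
  have A: "\<not> indep KS (E7 - {0, 4})" "\<forall>x\<in>E7 - {0, 4}. indep KS (E7 - {0, 4} - {x})"
    "\<forall>x\<in>E7 - {0, 4}. E7 - {0, x} \<in> bases KS \<and> E7 - {4, x} \<in> bases KS \<and>
           E7 - {0, x} \<noteq> E7 - {4, x} \<and> E7 - {0, 4} - {x} \<subseteq> E7 - {0, x} \<and> E7 - {0, 4} - {x} \<subseteq> E7 - {4, x}"
    using KS_circ[OF k04 o04] by blast+
  have B: "\<not> indep KS (E7 - {1, 5})" "\<forall>x\<in>E7 - {1, 5}. indep KS (E7 - {1, 5} - {x})"
    "\<forall>x\<in>E7 - {1, 5}. E7 - {1, x} \<in> bases KS \<and> E7 - {5, x} \<in> bases KS \<and>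
           E7 - {1, x} \<noteq> E7 - {5, x} \<and> E7 - {1, 5} - {x} \<subseteq> E7 - {1, x} \<and> E7 - {1, 5} - {x} \<subseteq> E7 - {5, x}"
    using KS_circ[OF k15 o15] by blast+
  let ?C1 = "E7 - {0, 4}" and ?C2 = "E7 - {1, 5}"
  let ?D = "(?C1 - ?C2) \<union> (?C2 - ?C1)"
  have Dsub: "?D \<subseteq> E7 - {2, 3}" "?D \<subseteq> E7 - {6, 3}" by auto
  have D0: "0 \<in> ?D" by simp
  have Dind: "indep KS ?D"
  proof -
    have "2 \<in> E7 - ?D" "3 \<in> E7 - ?D" by auto
    moreover have "Kcls 2 \<noteq> Kcls 3" by (simp add: Kcls_def)
    ultimately have "2 \<le> card (Kcls ` (E7 - ?D))" using card2_img[of 2 "E7 - ?D" 3 Kcls] by simp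
    moreover have "?D \<subseteq> E7" by auto
    ultimately show ?thesis unfolding KS_indep by simp
  qed
  assume "in_R KS"
  then consider "binary KS" | N H where "is_matroid N" "binary N" "circuit_hyperplane N H" "KS = relax N H"
    unfolding in_R_def by blast
  then show False
  proof cases
    case 1
    show False
    proof (rule circ_delta[OF 1, of ?C1 ?C2])
      show "finite (ground KS)" by simp
      show "?C1 \<subseteq> ground KS" "?C2 \<subseteq> ground KS" by auto
      show "\<not> indep KS ?C1" by (rule A(1))
      show "\<not> indep KS ?C2" by (rule B(1))
      show "\<forall>x\<in>?C1. indep KS (?C1 - {x})" using A(2) by blast
      show "\<forall>x\<in>?C2. indep KS (?C2 - {x})" using B(2) by blast
      show "indep KS ?D" by (rule Dind)
      show "?D \<noteq> {}" using D0 by blast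
    qed
  next
    case 2
    note ri = relax_info[OF 2(3,4)]
    have gN: "ground N = E7" using ri by simp
    show False
    proof (rule circ_delta[OF 2(2), of ?C1 ?C2])
      show "finite (ground N)" using gN by simp
      show "?C1 \<subseteq> ground N" "?C2 \<subseteq> ground N" using gN by auto
      show "\<not> indep N ?C1" by (rule dep_relaxN[OF ri(2) A(1)])
      show "\<not> indep N ?C2" by (rule dep_relaxN[OF ri(2) B(1)])
      show "\<forall>x\<in>?C1. indep N (?C1 - {x})"
      proof
        fix x assume x: "x \<in> ?C1"
        have "E7 - {0, x} \<in> bases KS \<and> E7 - {4, x} \<in> bases KS \<and>
           E7 - {0, x} \<noteq> E7 - {4, x} \<and> ?C1 - {x} \<subseteq> E7 - {0, x} \<and> ?C1 - {x} \<subseteq> E7 - {4, x}"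
          using A(3) x by blast
        then show "indep N (?C1 - {x})" using two_bases[OF ri(2), of "E7 - {0, x}" "E7 - {4, x}" "?C1 - {x}"] by simp
      qed
      show "\<forall>x\<in>?C2. indep N (?C2 - {x})"
      proof
        fix x assume x: "x \<in> ?C2"
        have "E7 - {1, x} \<in> bases KS \<and> E7 - {5, x} \<in> bases KS \<and>
           E7 - {1, x} \<noteq> E7 - {5, x} \<and> ?C2 - {x} \<subseteq> E7 - {1, x} \<and> ?C2 - {x} \<subseteq> E7 - {5, x}"
          using B(3) x by blast
        then show "indep N (?C2 - {x})" using two_bases[OF ri(2), of "E7 - {1, x}" "E7 - {5, x}" "?C2 - {x}"] by simp
      qed
      have b1: "E7 - {2, 3} \<in> bases KS" "E7 - {6, 3} \<in> bases KS"
        using Kb[of 2 3] Kb[of 6 3] by (simp_all add: Kcls_def)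
      have "(2::nat) \<in> E7 - {6, 3}" "(2::nat) \<notin> E7 - {2, 3}" by simp_all
      then have "E7 - {2, 3} \<noteq> E7 - {6, 3}" by blast
      then show "indep N ?D" by (rule two_bases[OF ri(2) b1 _ Dsub])
      show "?D \<noteq> {}" using D0 by blast
    qed
  qed
qed


theorem lemma2p10:
  shows "excluded_minor_R (uniform 2 5) \<and> excluded_minor_R (uniform 3 5) \<and>
         excluded_minor_R K \<and> excluded_minor_R Kstar"
proof (intro conjI)
  have cU: "2 \<le> cl E5 {} id" by (simp add: cl_def)
  have cK: "2 \<le> cl E7 {} Kcls" by (simp add: cl_def Kcls_img)
  show "excluded_minor_R (uniform 2 5)"
    unfolding excluded_minor_R_def U25_eq
    using is_matroid_T[OF _ cU] notR_U25 proper_minor_inR[OF good_U] by auto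
  show "excluded_minor_R (uniform 3 5)"
    unfolding excluded_minor_R_def
  proof (intro conjI allI impI)
    show "is_matroid (uniform 3 5)" unfolding U35_eq using is_matroid_dual_T[OF _ cU] by simp
    show "\<not> in_R (uniform 3 5)" unfolding U35_T by (rule notR_U35)
    fix N assume "proper_minor N (uniform 3 5)"
    then show "in_R N" unfolding U35_eq by (rule proper_minor_dual_inR[OF good_U])
  qed
  show "excluded_minor_R K"
    unfolding excluded_minor_R_def K_eq
    using is_matroid_T[OF _ cK] notR_K proper_minor_inR[OF good_K] by auto
  show "excluded_minor_R Kstar"
    unfolding excluded_minor_R_def Kstar_eq
    using is_matroid_dual_T[OF _ cK] notR_KS proper_minor_dual_inR[OF good_K] by auto
qed


end
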